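(* Consider the decoupled midpoint–Newmark-$\beta$ method described in the context, with $\gamma=1/2$ and no external field, and assume that at every step $i\ge1$ the extrapolation $\hat{\mathbf{m}}_h^{i+1/2}$ is nonzero at all nodes $z\in\mathcal{N}_h$ (so all iterates are well defined). Then for each $j\ge2$, \[ \|\nabla\mathbf{m}_h^{j}\|^2 + k\sum_{i=1}^{j-1}\|\mathbf{v}_h^{i+1}\|^2 \lesssim \|\nabla\mathbf{m}_h^{1}\|^2 + k\sum_{i=0}^{j-1}\left(1+\|\boldsymbol{\varepsilon}(\mathbf{u}_h^{i})\|^2\right), \] where the hidden constant depends on the problem data but is independent of $h$ and $k$.
   Context: Let $\Omega\subset\mathbb{R}^3$ be a bounded polyhedral Lipschitz domain whose boundary is split into disjoint relatively open parts $\Gamma_D$ (of positive surface measure) and $\Gamma_N$ with $\partial\Omega=\overline{\Gamma}_D\cup\overline{\Gamma}_N$. Let $\mathcal{T}_h$ be a tetrahedral mesh of $\Omega$ with mesh size $h$ and node set $\mathcal{N}_h$; $\mathcal{S}^1(\mathcal{T}_h)$ is the space of globally continuous, piecewise affine functions, and $\mathcal{S}^1_D(\mathcal{T}_h)$ the subspace of those vanishing on $\Gamma_D$. $(\cdot,\cdot)$ and $\|\cdot\|$ denote the $L^2(\Omega)$ inner product and norm. For $\boldsymbol{\varphi}_h\in\mathcal{S}^1(\mathcal{T}_h)^3$ nonvanishing at all nodes, $\Pi_h\boldsymbol{\varphi}_h\in\mathcal{S}^1(\mathcal{T}_h)^3$ is defined by $\Pi_h\boldsymbol{\varphi}_h(z)=\boldsymbol{\varphi}_h(z)/|\boldsymbol{\varphi}_h(z)|$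 for $z\in\mathcal{N}_h$. For $\mathbf{m}_h\in\mathcal{S}^1(\mathcal{T}_h)^3$, $\mathbb{K}_h[\mathbf{m}_h]=\{\boldsymbol{\psi}_h\in\mathcal{S}^1(\mathcal{T}_h)^3:\mathbf{m}_h(z)\cdot\boldsymbol{\psi}_h(z)=0\ \forall z\in\mathcal{N}_h\}$, and $\mathcal{M}_{h,0}=\{\boldsymbol{\varphi}_h\in\mathcal{S}^1(\mathcal{T}_h)^3: |\boldsymbol{\varphi}_h(z)|=1\ \forall z\in\mathcal{N}_h\}$. Tensors: $\mathbb{Z}\in\mathbb{R}^{3^4}$ is a constant magnetostriction tensor with minor symmetry; $\mathbb{C}\in\mathbb{R}^{3^4}$ is a constant elasticity tensor, fully symmetric (major and minor symmetry) and uniformly positive definite. For a fourth-order tensor $\mathbb{A}$ and matrix $A$, $(\mathbb{A}:A)_{ij}=\sum_{k,\ell}\mathbb{A}_{ijk\ell}A_{k\ell}$; $(\mathbb{A}^\top)_{ijk\ell}=\mathbb{A}_{k\ell ij}$; $(\mathbf{a}\otimes\mathbf{b})_{ij}=a_ib_j$. Set $\boldsymbol{\varepsilon}(\mathbf{u})=(\nabla\mathbf{u}+\nabla\mathbf{u}^\top)/2$, $\boldsymbol{\varepsilon}_{\mathrm m}(\mathbf{m})=\mathbb{Z}:(\mathbf{m}\otimes\mathbf{m})$, $\boldsymbol{\sigma}[\mathbf{u},\mathbf{m}]=\mathbb{C}:(\boldsymbol{\varepsilon}(\mathbf{u})-\boldsymbol{\varepsilon}_{\mathrm m}(\mathbf{m}))$,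 and $\|A\|_{\mathbb{C}}^2=(\mathbb{C}:A,A)$. The vector $2\mathbb{Z}^\top:\boldsymbol{\sigma}[\mathbf{u},\mathbf{m}]\mathbf{m}$ denotes the matrix $2\mathbb{Z}^\top:\boldsymbol{\sigma}[\mathbf{u},\mathbf{m}]$ applied to $\mathbf{m}$. $\alpha>0$ is the Gilbert damping constant. Time discretization: $T>0$, $N\in\mathbb{N}$, $k=T/N$. $d_t\boldsymbol{\varphi}^i=(\boldsymbol{\varphi}^i-\boldsymbol{\varphi}^{i-1})/k$; $d_t^2\boldsymbol{\varphi}^{i+1}=(\boldsymbol{\varphi}^{i+1}-2\boldsymbol{\varphi}^i+\boldsymbol{\varphi}^{i-1})/k^2$ for $i\ge1$, and $d_t^2\mathbf{u}_h^1=(\mathbf{u}_h^1-\mathbf{u}_h^0-k\dot{\mathbf{u}}_h^0)/k^2$; $\hat{\boldsymbol{\varphi}}^{i+1/2}=\tfrac32\boldsymbol{\varphi}^i-\tfrac12\boldsymbol{\varphi}^{i-1}$. Method (parameters $\beta\in[0,1/2]$, $\gamma=1/2$, zero external field). Input: $\mathbf{m}_h^0\in\mathcal{M}_{h,0}$, $\mathbf{u}_h^0\in\mathcal{S}^1_D(\mathcal{T}_h)^3$, $\dot{\mathbf{u}}_h^0\in\mathcal{S}^1(\mathcal{T}_h)^3$. Initialization: (1) find $\mathbf{v}_h^1\in\mathbb{K}_h[\mathbf{m}_h^0]$ with $\alpha(\mathbf{v}_h^1,\boldsymbol{\varphi}_h)+(\mathbf{m}_h^0\times\mathbf{v}_h^1,\boldsymbol{\varphi}_h)+\tfrac{k}{2}(\nabla\mathbf{v}_h^1,\nabla\boldsymbol{\varphi}_h)=-(\nabla\mathbf{m}_h^0,\nabla\boldsymbol{\varphi}_h)+(2\mathbb{Z}^\top:\boldsymbol{\sigma}[\mathbf{u}_h^0,\mathbf{m}_h^0]\mathbf{m}_h^0,\boldsymbol{\varphi}_h)$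 for all $\boldsymbol{\varphi}_h\in\mathbb{K}_h[\mathbf{m}_h^0]$, and set $\mathbf{m}_h^1=\mathbf{m}_h^0+k\mathbf{v}_h^1$. (2) find $\mathbf{u}_h^1\in\mathcal{S}^1_D(\mathcal{T}_h)^3$ with $(d_t^2\mathbf{u}_h^1,\boldsymbol{\psi}_h)+\beta(\mathbb{C}:\boldsymbol{\varepsilon}(\mathbf{u}_h^1),\boldsymbol{\varepsilon}(\boldsymbol{\psi}_h))=-(\tfrac12-\beta)(\boldsymbol{\sigma}[\mathbf{u}_h^0,\mathbf{m}_h^0],\boldsymbol{\varepsilon}(\boldsymbol{\psi}_h))+\beta(\mathbb{C}:\boldsymbol{\varepsilon}_{\mathrm m}(\Pi_h\mathbf{m}_h^1),\boldsymbol{\varepsilon}(\boldsymbol{\psi}_h))$ for all $\boldsymbol{\psi}_h\in\mathcal{S}^1_D(\mathcal{T}_h)^3$. Loop, $i=1,\dots,N-1$: (i) find $\mathbf{v}_h^{i+1}\in\mathbb{K}_h[\hat{\mathbf{m}}_h^{i+1/2}]$ with $\alpha(\mathbf{v}_h^{i+1},\boldsymbol{\varphi}_h)+(\hat{\mathbf{m}}_h^{i+1/2}\times\mathbf{v}_h^{i+1},\boldsymbol{\varphi}_h)+\tfrac{k}{2}(\nabla\mathbf{v}_h^{i+1},\nabla\boldsymbol{\varphi}_h)=-(\nabla\mathbf{m}_h^i,\nabla\boldsymbol{\varphi}_h)+(2\mathbb{Z}^\top:\boldsymbol{\sigma}[\hat{\mathbf{u}}_h^{i+1/2},\Pi_h\hat{\mathbf{m}}_h^{i+1/2}]\Pi_h\hat{\mathbf{m}}_h^{i+1/2},\boldsymbol{\varphi}_h)$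 for all $\boldsymbol{\varphi}_h\in\mathbb{K}_h[\hat{\mathbf{m}}_h^{i+1/2}]$, and set $\mathbf{m}_h^{i+1}=\mathbf{m}_h^i+k\mathbf{v}_h^{i+1}$; (ii) find $\mathbf{u}_h^{i+1}\in\mathcal{S}^1_D(\mathcal{T}_h)^3$ with $(d_t^2\mathbf{u}_h^{i+1},\boldsymbol{\psi}_h)+\beta(\mathbb{C}:\boldsymbol{\varepsilon}(\mathbf{u}_h^{i+1}),\boldsymbol{\varepsilon}(\boldsymbol{\psi}_h))=-(1-2\beta)(\boldsymbol{\sigma}[\mathbf{u}_h^i,\Pi_h\mathbf{m}_h^i],\boldsymbol{\varepsilon}(\boldsymbol{\psi}_h))-\beta(\boldsymbol{\sigma}[\mathbf{u}_h^{i-1},\Pi_h\mathbf{m}_h^{i-1}],\boldsymbol{\varepsilon}(\boldsymbol{\psi}_h))+\beta(\mathbb{C}:\boldsymbol{\varepsilon}_{\mathrm m}(\Pi_h\mathbf{m}_h^{i+1}),\boldsymbol{\varepsilon}(\boldsymbol{\psi}_h))$ for all $\boldsymbol{\psi}_h\in\mathcal{S}^1_D(\mathcal{T}_h)^3$. Notation: $a\lesssim b$ means $a\le Cb$ with $C>0$ independent of $h$ and $k$. *)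

theory Defs
  imports "HOL-Analysis.Analysis"
begin

type_synonym pt = "real^3"
type_synonym mat3 = "real^3^3"
type_synonym tensor4 = "3 \<Rightarrow> 3 \<Rightarrow> 3 \<Rightarrow> 3 \<Rightarrow> real"
type_synonym vfield = "real^3 \<Rightarrow> real^3"

definition lipschitz_domain :: "pt set \<Rightarrow> bool" where
  "lipschitz_domain \<Omega> \<longleftrightarrow> open \<Omega> \<and> bounded \<Omega> \<and> connected \<Omega> \<and> \<Omega> \<noteq> {} \<and>
    (\<forall>p\<in>frontier \<Omega>. \<exists>r>0. \<exists>Q L (g::real \<Rightarrow> real \<Rightarrow> real).
       orthogonal_transformation (Q :: pt \<Rightarrow> pt) \<and>
       (\<forall>s1 t1 s2 t2. \<bar>g s1 t1 - g s2 t2\<bar> \<le> L * dist (s1, t1) (s2, t2)) \<and>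
       \<Omega> \<inter> ball p r = {x \<in> ball p r. g (Q x $ 1) (Q x $ 2) < Q x $ 3})"

definition polyhedral_domain :: "pt set \<Rightarrow> bool" where
  "polyhedral_domain \<Omega> \<longleftrightarrow>
     (\<exists>\<P>. finite \<P> \<and> (\<forall>P\<in>\<P>. polytope P) \<and> closure \<Omega> = \<Union>\<P>)"

text \<open>Splitting of the boundary into disjoint relatively open parts; positive surface
measure of \<Gamma>_D is rendered as nonemptiness.\<close>
definition boundary_split :: "pt set \<Rightarrow> pt set \<Rightarrow> pt set \<Rightarrow> bool" where
  "boundary_split \<Omega> \<Gamma>D \<Gamma>N \<longleftrightarrow>
     openin (top_of_set (frontier \<Omega>)) \<Gamma>D \<and> openin (top_of_set (frontier \<Omega>)) \<Gamma>N \<and>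
     \<Gamma>D \<inter> \<Gamma>N = {} \<and> frontier \<Omega> = closure \<Gamma>D \<union> closure \<Gamma>N \<and> \<Gamma>D \<noteq> {}"

text \<open>A mesh is a finite set of vertex sets of (nondegenerate) tetrahedra; elements are
their convex hulls.\<close>
definition tetra :: "pt set \<Rightarrow> bool" where
  "tetra V \<longleftrightarrow> finite V \<and> card V = 4 \<and> \<not> affine_dependent V"

definition tet_mesh :: "pt set set \<Rightarrow> pt set \<Rightarrow> bool" where
  "tet_mesh \<T> \<Omega> \<longleftrightarrow> finite \<T> \<and> \<T> \<noteq> {} \<and> (\<forall>V\<in>\<T>. tetra V) \<and>
     (\<Union>V\<in>\<T>. convex hull V) = closure \<Omega> \<and>
     (\<forall>V\<in>\<T>. \<forall>W\<in>\<T>. V \<noteq> W \<longrightarrow> convex hull V \<inter> convex hull W = convex hull (V \<inter> W))"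

definition nodes :: "pt set set \<Rightarrow> pt set" where
  "nodes \<T> = \<Union>\<T>"

text \<open>Globally continuous, elementwise affine vector fields on closure Omega
(extended by zero outside closure Omega, so that they are determined by nodal values).\<close>
definition S1 :: "pt set set \<Rightarrow> pt set \<Rightarrow> vfield set" where
  "S1 \<T> \<Omega> = {u. continuous_on (closure \<Omega>) u \<and>
      (\<forall>V\<in>\<T>. \<exists>(M::mat3) b. \<forall>x\<in>convex hull V. u x = M *v x + b) \<and>
      (\<forall>x. x \<notin> closure \<Omega> \<longrightarrow> u x = 0)}"

definition S1D :: "pt set set \<Rightarrow> pt set \<Rightarrow> pt set \<Rightarrow> vfield set" where
  "S1D \<T> \<Omega> \<Gamma>D = {u \<in> S1 \<T> \<Omega>. \<forall>x\<in>\<Gamma>D. u x = 0}"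

definition Kh :: "pt set set \<Rightarrow> pt set \<Rightarrow> vfield \<Rightarrow> vfield set" where
  "Kh \<T> \<Omega> m = {\<psi> \<in> S1 \<T> \<Omega>. \<forall>z\<in>nodes \<T>. m z \<bullet> \<psi> z = 0}"

definition Mh0 :: "pt set set \<Rightarrow> pt set \<Rightarrow> vfield set" where
  "Mh0 \<T> \<Omega> = {\<phi> \<in> S1 \<T> \<Omega>. \<forall>z\<in>nodes \<T>. norm (\<phi> z) = 1}"

definition Pih :: "pt set set \<Rightarrow> pt set \<Rightarrow> vfield \<Rightarrow> vfield" where
  "Pih \<T> \<Omega> \<phi> = (THE w. w \<in> S1 \<T> \<Omega> \<and> (\<forall>z\<in>nodes \<T>. w z = sgn (\<phi> z)))"

definition grad :: "vfield \<Rightarrow> pt \<Rightarrow> mat3" where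
  "grad u x = jacobian u (at x)"

definition symeps :: "vfield \<Rightarrow> pt \<Rightarrow> mat3" where
  "symeps u x = (1/2) *\<^sub>R (grad u x + transpose (grad u x))"

definition frob :: "mat3 \<Rightarrow> mat3 \<Rightarrow> real" where
  "frob A B = (\<Sum>i\<in>UNIV. \<Sum>j\<in>UNIV. A $ i $ j * B $ i $ j)"

definition ddot :: "tensor4 \<Rightarrow> mat3 \<Rightarrow> mat3" where
  "ddot T A = (\<chi> i j. \<Sum>k\<in>UNIV. \<Sum>l\<in>UNIV. T i j k l * A $ k $ l)"

definition ttrans :: "tensor4 \<Rightarrow> tensor4" where
  "ttrans T = (\<lambda>i j k l. T k l i j)"

definition outer :: "real^3 \<Rightarrow> real^3 \<Rightarrow> mat3" where
  "outer a b = (\<chi> i j. a $ i * b $ j)"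

definition minor_sym :: "tensor4 \<Rightarrow> bool" where
  "minor_sym T \<longleftrightarrow> (\<forall>i j k l. T i j k l = T j i k l \<and> T i j k l = T i j l k)"

definition major_sym :: "tensor4 \<Rightarrow> bool" where
  "major_sym T \<longleftrightarrow> (\<forall>i j k l. T i j k l = T k l i j)"

definition unif_pos_def :: "tensor4 \<Rightarrow> bool" where
  "unif_pos_def T \<longleftrightarrow> (\<exists>c>0. \<forall>A::mat3. transpose A = A \<longrightarrow> frob (ddot T A) A \<ge> c * frob A A)"

definition eps_m :: "tensor4 \<Rightarrow> vfield \<Rightarrow> pt \<Rightarrow> mat3" where
  "eps_m Z m x = ddot Z (outer (m x) (m x))"

definition sigma :: "tensor4 \<Rightarrow> tensor4 \<Rightarrow> vfield \<Rightarrow> vfield \<Rightarrow> pt \<Rightarrow> mat3" where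
  "sigma Z C u m x = ddot C (symeps u x - eps_m Z m x)"

definition mstress :: "tensor4 \<Rightarrow> tensor4 \<Rightarrow> vfield \<Rightarrow> vfield \<Rightarrow> vfield" where
  "mstress Z C u m x = (2 *\<^sub>R ddot (ttrans Z) (sigma Z C u m x)) *v m x"

definition ip :: "pt set \<Rightarrow> vfield \<Rightarrow> vfield \<Rightarrow> real" where
  "ip \<Omega> f g = (LINT x:\<Omega>|lborel. f x \<bullet> g x)"

definition mip :: "pt set \<Rightarrow> (pt \<Rightarrow> mat3) \<Rightarrow> (pt \<Rightarrow> mat3) \<Rightarrow> real" where
  "mip \<Omega> A B = (LINT x:\<Omega>|lborel. frob (A x) (B x))"

definition gip :: "pt set \<Rightarrow> vfield \<Rightarrow> vfield \<Rightarrow> real" where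
  "gip \<Omega> f g = mip \<Omega> (grad f) (grad g)"

definition hat :: "(nat \<Rightarrow> vfield) \<Rightarrow> nat \<Rightarrow> vfield" where
  "hat f i = (\<lambda>x. (3/2) *\<^sub>R f i x - (1/2) *\<^sub>R f (i - 1) x)"

definition scheme ::
  "pt set \<Rightarrow> pt set \<Rightarrow> pt set set \<Rightarrow> real \<Rightarrow> real \<Rightarrow> tensor4 \<Rightarrow> tensor4 \<Rightarrow> real \<Rightarrow> nat \<Rightarrow>
   (nat \<Rightarrow> vfield) \<Rightarrow> (nat \<Rightarrow> vfield) \<Rightarrow> (nat \<Rightarrow> vfield) \<Rightarrow> vfield \<Rightarrow> bool" where
  "scheme \<Omega> \<Gamma>D \<T> \<alpha> \<beta> Z C k N m v u ud0 \<longleftrightarrow>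
     m 0 \<in> Mh0 \<T> \<Omega> \<and> u 0 \<in> S1D \<T> \<Omega> \<Gamma>D \<and> ud0 \<in> S1 \<T> \<Omega> \<and>
     \<comment> \<open>initialization (1)\<close>
     v 1 \<in> Kh \<T> \<Omega> (m 0) \<and>
     (\<forall>\<phi>\<in>Kh \<T> \<Omega> (m 0).
        \<alpha> * ip \<Omega> (v 1) \<phi> + ip \<Omega> (\<lambda>x. cross3 (m 0 x) (v 1 x)) \<phi> + k / 2 * gip \<Omega> (v 1) \<phi>
        = - gip \<Omega> (m 0) \<phi> + ip \<Omega> (mstress Z C (u 0) (m 0)) \<phi>) \<and>
     m 1 = (\<lambda>x. m 0 x + k *\<^sub>R v 1 x) \<and>
     \<comment> \<open>initialization (2)\<close>
     u 1 \<in> S1D \<T> \<Omega> \<Gamma>D \<and>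
     (\<forall>\<psi>\<in>S1D \<T> \<Omega> \<Gamma>D.
        ip \<Omega> (\<lambda>x. (1 / k\<^sup>2) *\<^sub>R (u 1 x - u 0 x - k *\<^sub>R ud0 x)) \<psi>
          + \<beta> * mip \<Omega> (\<lambda>x. ddot C (symeps (u 1) x)) (symeps \<psi>)
        = - (1/2 - \<beta>) * mip \<Omega> (sigma Z C (u 0) (m 0)) (symeps \<psi>)
          + \<beta> * mip \<Omega> (\<lambda>x. ddot C (eps_m Z (Pih \<T> \<Omega> (m 1)) x)) (symeps \<psi>)) \<and>
     \<comment> \<open>time loop, i = 1, ..., N-1\<close>
     (\<forall>i. 1 \<le> i \<and> i \<le> N - 1 \<longrightarrow>
        v (i+1) \<in> Kh \<T> \<Omega> (hat m i) \<and>
        (\<forall>\<phi>\<in>Kh \<T> \<Omega> (hat m i).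
           \<alpha> * ip \<Omega> (v (i+1)) \<phi> + ip \<Omega> (\<lambda>x. cross3 (hat m i x) (v (i+1) x)) \<phi>
             + k / 2 * gip \<Omega> (v (i+1)) \<phi>
           = - gip \<Omega> (m i) \<phi>
             + ip \<Omega> (mstress Z C (hat u i) (Pih \<T> \<Omega> (hat m i))) \<phi>) \<and>
        m (i+1) = (\<lambda>x. m i x + k *\<^sub>R v (i+1) x) \<and>
        u (i+1) \<in> S1D \<T> \<Omega> \<Gamma>D \<and>
        (\<forall>\<psi>\<in>S1D \<T> \<Omega> \<Gamma>D.
           ip \<Omega> (\<lambda>x. (1 / k\<^sup>2) *\<^sub>R (u (i+1) x - 2 *\<^sub>R u i x + u (i-1) x)) \<psi>
             + \<beta> * mip \<Omega> (\<lambda>x. ddot C (symeps (u (i+1)) x)) (symeps \<psi>)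
           = - (1 - 2*\<beta>) * mip \<Omega> (sigma Z C (u i) (Pih \<T> \<Omega> (m i))) (symeps \<psi>)
             - \<beta> * mip \<Omega> (sigma Z C (u (i-1)) (Pih \<T> \<Omega> (m (i-1)))) (symeps \<psi>)
             + \<beta> * mip \<Omega> (\<lambda>x. ddot C (eps_m Z (Pih \<T> \<Omega> (m (i+1))) x)) (symeps \<psi>)))"

end

theory Submission
  imports Defs
begin


lemma tet_mesh_cell:
  assumes "tet_mesh T \<Omega>" "V \<in> T"
  shows "finite V" "card V = 4" "\<not> affine_dependent V" "compact (convex hull V)"
    "closed (convex hull V)" "convex (convex hull V)" "interior (convex hull V) \<noteq> {}"
proof -
  have t: "tetra V" using assms unfolding tet_mesh_def by auto
  then show f: "finite V" "card V = 4" "\<not> affine_dependent V" unfolding tetra_def by auto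
  show "compact (convex hull V)" using f by (simp add: finite_imp_compact_convex_hull)
  then show "closed (convex hull V)" by (simp add: compact_imp_closed)
  show "convex (convex hull V)" by simp
  have "card V = Suc (DIM(real^3))" using f by simp
  then show "interior (convex hull V) \<noteq> {}" using interior_convex_hull_eq_empty f by blast
qed

lemma tet_mesh_cover:
  assumes "tet_mesh T \<Omega>" shows "closure \<Omega> = (\<Union>V\<in>T. convex hull V)" "finite T"
  using assms unfolding tet_mesh_def by auto

lemma tet_mesh_conf:
  assumes "tet_mesh T \<Omega>" "V \<in> T" "W \<in> T" "V \<noteq> W"
  shows "convex hull V \<inter> convex hull W = convex hull (V \<inter> W)"
  using assms unfolding tet_mesh_def by auto

lemma S1_rep:
  assumes "f \<in> S1 T \<Omega>" "V \<in> T"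
  shows "\<exists>M b. \<forall>x\<in>convex hull V. f x = M *v x + b"
  using assms unfolding S1_def by auto

lemma S1_lin:
  assumes "f \<in> S1 T \<Omega>" "g \<in> S1 T \<Omega>"
  shows "(\<lambda>x. a *\<^sub>R f x + b *\<^sub>R g x) \<in> S1 T \<Omega>"
proof -
  have c: "continuous_on (closure \<Omega>) (\<lambda>x. a *\<^sub>R f x + b *\<^sub>R g x)"
    using assms unfolding S1_def by (intro continuous_on_add continuous_on_scaleR continuous_on_const) auto
  have p: "\<exists>M c. \<forall>x\<in>convex hull V. a *\<^sub>R f x + b *\<^sub>R g x = M *v x + c" if V: "V \<in> T" for V
  proof -
    obtain M1 b1 where 1: "\<forall>x\<in>convex hull V. f x = M1 *v x + b1" using S1_rep[OF assms(1) V] by blast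
    obtain M2 b2 where 2: "\<forall>x\<in>convex hull V. g x = M2 *v x + b2" using S1_rep[OF assms(2) V] by blast
    have "\<forall>x\<in>convex hull V. a *\<^sub>R f x + b *\<^sub>R g x = (a *\<^sub>R M1 + b *\<^sub>R M2) *v x + (a *\<^sub>R b1 + b *\<^sub>R b2)"
      using 1 2 by (simp add: matrix_vector_mult_add_rdistrib scaleR_matrix_vector_assoc scaleR_add_right)
    then show ?thesis by blast
  qed
  have z: "\<forall>x. x \<notin> closure \<Omega> \<longrightarrow> a *\<^sub>R f x + b *\<^sub>R g x = 0"
    using assms unfolding S1_def by simp
  show ?thesis unfolding S1_def mem_Collect_eq using c p z by blast
qed

lemma affine_convex_pre:
  fixes M :: "real^3^3"
  assumes "convex S" shows "convex {y. M *v y + b \<in> S}"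
proof (rule convexI)
  fix x y :: "real^3" and u v :: real
  assume h: "x \<in> {y. M *v y + b \<in> S}" "y \<in> {y. M *v y + b \<in> S}" "0 \<le> u" "0 \<le> v" "u + v = 1"
  have e: "u *\<^sub>R b + v *\<^sub>R b = b" using h(5) by (metis scaleR_add_left scaleR_one)
  have "M *v (u *\<^sub>R x + v *\<^sub>R y) + (u *\<^sub>R b + v *\<^sub>R b) = u *\<^sub>R (M *v x + b) + v *\<^sub>R (M *v y + b)"
    by (simp add: matrix_vector_right_distrib algebra_simps)
  then have "M *v (u *\<^sub>R x + v *\<^sub>R y) + b = u *\<^sub>R (M *v x + b) + v *\<^sub>R (M *v y + b)"
    by (simp only: e)
  then show "u *\<^sub>R x + v *\<^sub>R y \<in> {y. M *v y + b \<in> S}" using convexD[OF assms _ _ h(3) h(4) h(5)] h(1,2) by simp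
qed


lemma jac_of_deriv:
  fixes M :: "real^3^3"
  assumes "(f has_derivative (\<lambda>h. M *v h)) (at x)"
  shows "grad f x = M"
  unfolding grad_def jacobian_def using frechet_derivative_at[OF assms] matrix_of_matrix_vector_mul
  by metis

lemma affine_has_deriv: fixes M :: "real^3^3" shows "((\<lambda>y. M *v y + b) has_derivative (\<lambda>h. M *v h)) (at x)"
proof -
  have "bounded_linear (\<lambda>h. M *v h)" using matrix_vector_mul_linear[of M] linear_conv_bounded_linear by auto
  then show ?thesis by (intro has_derivative_add_const bounded_linear_imp_has_derivative)
qed

lemma deriv_interior:
  fixes M :: "real^3^3"
  assumes "\<forall>y\<in>K. f y = M *v y + b" "x \<in> interior K"
  shows "(f has_derivative (\<lambda>h. M *v h)) (at x)"
  by (rule has_derivative_transform_within_open[OF affine_has_deriv[of M b x] open_interior assms(2)])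
     (metis assms(1) interior_subset subsetD)

lemma le_eps_zero:
  fixes a c :: real
  assumes "\<And>e. e > 0 \<Longrightarrow> a \<le> e * c" "c \<ge> 0"
  shows "a \<le> 0"
proof (rule ccontr)
  assume "\<not> a \<le> 0"
  then have a: "a > 0" by simp
  have "a \<le> (a / (c + 1)) * c" using assms(1)[of "a / (c+1)"] a assms(2) by simp
  also have "\<dots> < a" using a assms(2) by (simp add: field_simps)
  finally show False by simp
qed

lemma deriv_unique_cvx:
  fixes f :: "real^3 \<Rightarrow> real^3" and M :: "real^3^3"
  assumes K: "convex K" "interior K \<noteq> {}" "x \<in> K" and A: "\<forall>y\<in>K. f y = M *v y + b"
    and d: "(f has_derivative L) (at x)"
  shows "L = (\<lambda>h. M *v h)"
proof -
  have lin: "linear L" using d by (rule has_derivative_linear)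
  define D where "D h = L h - M *v h" for h
  have linD: "linear D" unfolding D_def
    by (intro linear_compose_sub lin matrix_vector_mul_linear)
  have key: "D (y - x) = 0" if y: "y \<in> K" for y
  proof -
    have "norm (D (y - x)) \<le> e * norm (y - x)" if e: "e > 0" for e
    proof -
      obtain \<delta> where \<delta>: "\<delta> > 0" and H: "\<forall>z. norm (z - x) < \<delta> \<longrightarrow> norm (f z - f x - L (z - x)) \<le> e * norm (z - x)"
        using d e unfolding has_derivative_at_alt by blast
      define t where "t = min (1/2) (\<delta> / (2*(norm(y-x)+1)))"
      have "\<delta> / (2*(norm(y-x)+1)) > 0" using \<delta> by (intro divide_pos_pos) (auto simp: add_nonneg_pos)
      then have t0: "t > 0" "t \<le> 1" by (auto simp: t_def)
      have "t * norm (y - x) \<le> (\<delta> / (2*(norm(y-x)+1))) * norm (y - x)"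
        unfolding t_def by (intro mult_right_mono) auto
      also have "\<dots> = \<delta> * (norm (y-x) / (2*(norm(y-x)+1)))" by simp
      also have "\<dots> < \<delta> * 1" proof (intro mult_strict_left_mono)
        have n0: "0 \<le> norm(y-x)" by simp
        moreover have "2*(norm(y-x)+1) > 0" using n0 by (smt (verit))
        ultimately show "norm (y-x) / (2*(norm(y-x)+1)) < 1" by (subst divide_less_eq) auto
      qed (use \<delta> in auto)
      finally have tn: "norm (t *\<^sub>R (y - x)) < \<delta>" using t0 by simp
      define z where "z = x + t *\<^sub>R (y - x)"
      have "z = (1 - t) *\<^sub>R x + t *\<^sub>R y" unfolding z_def by (simp add: algebra_simps)
      then have zK: "z \<in> K" using convexD[OF K(1) K(3) y, of "1 - t" t] t0 by simp
      have fz: "f z - f x = t *\<^sub>R (M *v (y - x))"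
        using A zK K(3) unfolding z_def by (simp add: matrix_vector_right_distrib matrix_vector_mult_diff_distrib matrix_vector_mult_scaleR)
      have Lz: "L (z - x) = t *\<^sub>R L (y - x)" unfolding z_def using linear_cmul[OF lin] by simp
      have zx: "z - x = t *\<^sub>R (y - x)" by (simp add: z_def)
      have "norm (f z - f x - L (z - x)) \<le> e * norm (z - x)" using H[rule_format, of z] tn by (simp only: zx)
      then have "norm (t *\<^sub>R (M *v (y - x)) - t *\<^sub>R L (y - x)) \<le> e * (t * norm (y - x))"
        using fz Lz t0 unfolding z_def by simp
      then have "t * norm (D (y - x)) \<le> t * (e * norm (y - x))"
        unfolding D_def using t0 by (simp add: norm_minus_commute flip: scaleR_diff_right)
      then show ?thesis using t0 by simp
    qed
    then have "norm (D (y - x)) \<le> 0" by (intro le_eps_zero) auto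
    then show ?thesis by simp
  qed
  obtain c r where r: "r > 0" "ball c r \<subseteq> K" using K(2) by (auto simp: mem_interior)
  have "D h = 0" for h
  proof (cases "h = 0")
    case True then show ?thesis using linear_0[OF linD] by simp
  next
    case False
    define s where "s = r / (2 * norm h)"
    have s: "s > 0" using r False by (simp add: s_def)
    have "norm (s *\<^sub>R h) < r" using r False by (simp add: s_def)
    then have "c + s *\<^sub>R h \<in> K" using r by (auto simp: dist_norm intro!: subsetD[OF r(2)])
    then have 1: "D (c + s *\<^sub>R h - x) = 0" by (rule key)
    have "c \<in> K" using r by (auto intro!: subsetD[OF r(2)])
    then have 2: "D (c - x) = 0" by (rule key)
    have e: "c + s *\<^sub>R h - x = (c - x) + s *\<^sub>R h" by simp
    have "D (c + s *\<^sub>R h - x) = D (c - x) + s *\<^sub>R D h"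
      unfolding e linear_add[OF linD] linear_cmul[OF linD] ..
    then show ?thesis using 1 2 s by simp
  qed
  then show ?thesis unfolding D_def by auto
qed



definition cM :: "vfield \<Rightarrow> pt set \<Rightarrow> mat3" where
  "cM f V = (SOME M. \<exists>b. \<forall>x\<in>convex hull V. f x = M *v x + b)"
definition cb :: "vfield \<Rightarrow> pt set \<Rightarrow> pt" where
  "cb f V = (SOME b. \<forall>x\<in>convex hull V. f x = cM f V *v x + b)"

lemma cM_cb:
  assumes "f \<in> S1 T \<Omega>" "V \<in> T"
  shows "\<forall>x\<in>convex hull V. f x = cM f V *v x + cb f V"
proof -
  have "\<exists>b. \<forall>x\<in>convex hull V. f x = cM f V *v x + b"
    unfolding cM_def using someI_ex[OF S1_rep[OF assms]] .
  then show ?thesis unfolding cb_def by (rule someI_ex)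
qed

definition cells :: "pt set set \<Rightarrow> pt \<Rightarrow> pt set set" where
  "cells T x = {V\<in>T. x \<in> convex hull V}"

lemma deriv_cells:
  assumes m: "tet_mesh T \<Omega>" and o: "open \<Omega>" and f: "f \<in> S1 T \<Omega>" and x: "x \<in> \<Omega>"
    and M: "\<forall>V\<in>cells T x. cM f V = M"
  shows "(f has_derivative (\<lambda>h. M *v h)) (at x)"
proof -
  define U where "U = \<Omega> - (\<Union>W\<in>{W\<in>T. x \<notin> convex hull W}. convex hull W)"
  have fin: "finite T" using tet_mesh_cover[OF m] by simp
  have "closed (\<Union>W\<in>{W\<in>T. x \<notin> convex hull W}. convex hull W)"
    using fin tet_mesh_cell(5)[OF m] by (intro closed_UN) auto
  then have oU: "open U" unfolding U_def using o by (intro open_Diff) auto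
  have xU: "x \<in> U" unfolding U_def using x by auto
  have eq: "M *v y + (f x - M *v x) = f y" if y: "y \<in> U" for y
  proof -
    have "y \<in> closure \<Omega>" using y closure_subset unfolding U_def by auto
    then obtain V where V: "V \<in> T" "y \<in> convex hull V" using tet_mesh_cover(1)[OF m] by auto
    then have xV: "x \<in> convex hull V" using y unfolding U_def by auto
    then have "V \<in> cells T x" using V unfolding cells_def by auto
    then have "cM f V = M" using M by auto
    then have "f y = M *v y + cb f V" "f x = M *v x + cb f V" using cM_cb[OF f V(1)] V xV by auto
    then show ?thesis by simp
  qed
  show ?thesis
    by (rule has_derivative_transform_within_open[OF affine_has_deriv[of M "f x - M *v x" x] oU xU])
       (use eq in auto)
qed

lemma not_diff_jac:
  assumes "\<And>L. \<not> (f has_derivative L) (at x)" "\<And>L. \<not> (f has_derivative L) (at y)"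
  shows "grad f x = grad f y"
proof -
  have "(\<lambda>L. (f has_derivative L) (at x)) = (\<lambda>L. (f has_derivative L) (at y))"
    using assms by auto
  then show ?thesis unfolding grad_def jacobian_def frechet_derivative_def by simp
qed

lemma grad_cells:
  assumes m: "tet_mesh T \<Omega>" and o: "open \<Omega>" and f: "f \<in> S1 T \<Omega>" and x: "x \<in> \<Omega>" and y: "y \<in> \<Omega>"
    and c: "cells T x = cells T y"
  shows "grad f x = grad f y"
proof (cases "\<exists>M. \<forall>V\<in>cells T x. cM f V = M")
  case True
  then obtain M where M: "\<forall>V\<in>cells T x. cM f V = M" by blast
  have "grad f x = M" using deriv_cells[OF m o f x M] by (rule jac_of_deriv)
  moreover have "grad f y = M" using deriv_cells[OF m o f y] M c by (intro jac_of_deriv) auto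
  ultimately show ?thesis by simp
next
  case False
  have nd: "\<not> (f has_derivative L) (at z)" if z: "cells T z = cells T x" for z L
  proof
    assume d: "(f has_derivative L) (at z)"
    have "\<forall>V\<in>cells T x. cM f V = matrix L"
    proof
      fix V assume "V \<in> cells T x"
      then have V: "V \<in> T" "z \<in> convex hull V" using z unfolding cells_def by auto
      have "L = (\<lambda>h. cM f V *v h)"
        using deriv_unique_cvx[OF tet_mesh_cell(6)[OF m V(1)] tet_mesh_cell(7)[OF m V(1)] V(2) cM_cb[OF f V(1)] d] .
      then show "cM f V = matrix L" by (simp add: matrix_of_matrix_vector_mul)
    qed
    then show False using False by blast
  qed
  show ?thesis by (rule not_diff_jac) (use nd c in auto)
qed


lemma cellset_borel:
  fixes T :: "pt set set"
  assumes "finite T" "\<And>V. V \<in> T \<Longrightarrow> closed (convex hull V)" "open \<Omega>"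
  shows "{x\<in>\<Omega>. \<forall>V\<in>T. x \<in> convex hull V \<longleftrightarrow> V \<in> A} \<in> sets borel"
proof -
  have "\<And>V. V \<in> T \<Longrightarrow> convex hull V \<in> sets borel" using assms(2) by (simp add: borel_closed)
  have "{x\<in>\<Omega>. \<forall>V\<in>T. x \<in> convex hull V \<longleftrightarrow> V \<in> A} = \<Omega> \<inter> (\<Inter>V\<in>T. {x. x \<in> convex hull V \<longleftrightarrow> V \<in> A})" by auto
  also have "\<dots> \<in> sets borel"
  proof (intro sets.Int)
    show "\<Omega> \<in> sets borel" using assms(3) by (simp add: borel_open)
    show "(\<Inter>V\<in>T. {x. x \<in> convex hull V \<longleftrightarrow> V \<in> A}) \<in> sets borel"
    proof (cases "T = {}")
      case True then show ?thesis by simp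
    next
      case False
      show ?thesis
      proof (rule sets.finite_INT[OF assms(1) False])
        fix V assume V: "V \<in> T"
        show "{x. x \<in> convex hull V \<longleftrightarrow> V \<in> A} \<in> sets borel"
        proof (cases "V \<in> A")
          case True then show ?thesis using assms(2)[OF V] by (simp add: borel_closed)
        next
          case False
          then have "{x. x \<in> convex hull V \<longleftrightarrow> V \<in> A} = - (convex hull V)" by auto
          then show ?thesis using assms(2)[OF V] by (simp add: borel_open open_Compl)
        qed
      qed
    qed
  qed
  finally show ?thesis .
qed


lemma grad_meas:
  assumes m: "tet_mesh T \<Omega>" and o: "open \<Omega>" and f: "f \<in> S1 T \<Omega>"
  shows "(\<lambda>x. indicator \<Omega> x *\<^sub>R grad f x) \<in> borel_measurable borel"
    and "\<exists>B. \<forall>x\<in>\<Omega>. norm (grad f x) \<le> B"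
proof -
  define P where "P A = {x\<in>\<Omega>. cells T x = A}" for A
  define rep where "rep A = (SOME x. x \<in> P A)" for A
  have fin: "finite T" using tet_mesh_cover[OF m] by simp
  have cT: "cells T x \<in> Pow T" for x unfolding cells_def by auto
  have grep: "grad f (rep (cells T x)) = grad f x" if x: "x \<in> \<Omega>" for x
  proof -
    have "x \<in> P (cells T x)" using x unfolding P_def by auto
    then have "rep (cells T x) \<in> P (cells T x)" unfolding rep_def by (rule someI)
    then show ?thesis using grad_cells[OF m o f _ x] unfolding P_def by auto
  qed
  have rep: "indicator \<Omega> x *\<^sub>R grad f x = (\<Sum>A\<in>Pow T. indicator (P A) x *\<^sub>R grad f (rep A))" for x
  proof (cases "x \<in> \<Omega>")
    case False
    then show ?thesis unfolding P_def by (simp add: indicator_def)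
  next
    case True
    have "(\<Sum>A\<in>Pow T. indicator (P A) x *\<^sub>R grad f (rep A)) = (\<Sum>A\<in>Pow T. if A = cells T x then grad f (rep A) else 0)"
      using True unfolding P_def by (intro sum.cong) (auto simp: indicator_def)
    also have "\<dots> = grad f (rep (cells T x))" using fin cT[of x] by (simp add: sum.delta')
    finally show ?thesis using grep[OF True] True by simp
  qed
  have Pb: "P A \<in> sets borel" if "A \<in> Pow T" for A
  proof -
    have "P A = {x\<in>\<Omega>. \<forall>V\<in>T. x \<in> convex hull V \<longleftrightarrow> V \<in> A}"
      using that unfolding P_def cells_def by auto
    then show ?thesis using cellset_borel[OF fin tet_mesh_cell(5)[OF m] o] by simp
  qed
  show "(\<lambda>x. indicator \<Omega> x *\<^sub>R grad f x) \<in> borel_measurable borel"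
    unfolding rep using Pb by (intro borel_measurable_sum borel_measurable_scaleR borel_measurable_indicator) auto
  show "\<exists>B. \<forall>x\<in>\<Omega>. norm (grad f x) \<le> B"
  proof (intro exI ballI)
    fix x assume x: "x \<in> \<Omega>"
    have "norm (grad f x) = norm (grad f (rep (cells T x)))" using grep[OF x] by simp
    also have "\<dots> \<le> (\<Sum>A\<in>Pow T. norm (grad f (rep A)))"
      using fin cT[of x] by (intro member_le_sum) auto
    finally show "norm (grad f x) \<le> (\<Sum>A\<in>Pow T. norm (grad f (rep A)))" .
  qed
qed



lemma frontier_null:
  fixes K :: "pt set"
  assumes "convex K"
  shows "frontier K \<in> null_sets lborel"
proof -
  have "frontier K \<in> null_sets lebesgue"
    using negligible_convex_frontier[OF assms] negligible_iff_null_sets by blast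
  moreover have "frontier K \<in> sets lborel" by (simp add: borel_closed)
  ultimately show ?thesis using null_sets_completion_iff by blast
qed

lemma grad_lin_AE:
  assumes m: "tet_mesh T \<Omega>" and f: "f \<in> S1 T \<Omega>" and g: "g \<in> S1 T \<Omega>"
  shows "AE x in lborel. x \<in> \<Omega> \<longrightarrow> grad (\<lambda>y. a *\<^sub>R f y + b *\<^sub>R g y) x = a *\<^sub>R grad f x + b *\<^sub>R grad g x"
proof (rule AE_I')
  define N where "N = (\<Union>V\<in>T. frontier (convex hull V))"
  have fin: "finite T" using tet_mesh_cover[OF m] by simp
  show "N \<in> null_sets lborel" unfolding N_def
    using fin by (intro null_sets.finite_UN frontier_null) auto
  show "{x \<in> space lborel. \<not> (x \<in> \<Omega> \<longrightarrow> grad (\<lambda>y. a *\<^sub>R f y + b *\<^sub>R g y) x = a *\<^sub>R grad f x + b *\<^sub>R grad g x)} \<subseteq> N"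
  proof (rule subsetI, rule ccontr)
    fix x assume x: "x \<in> {x \<in> space lborel. \<not> (x \<in> \<Omega> \<longrightarrow> grad (\<lambda>y. a *\<^sub>R f y + b *\<^sub>R g y) x = a *\<^sub>R grad f x + b *\<^sub>R grad g x)}"
      and xN: "x \<notin> N"
    then have xO: "x \<in> \<Omega>" by auto
    then have "x \<in> closure \<Omega>" using closure_subset by auto
    then obtain V where V: "V \<in> T" "x \<in> convex hull V" using tet_mesh_cover(1)[OF m] by auto
    have "x \<notin> frontier (convex hull V)" using xN V unfolding N_def by auto
    then have xi: "x \<in> interior (convex hull V)" using V(2) tet_mesh_cell(5)[OF m V(1)]
      by (simp add: frontier_def closure_closed)
    have df: "(f has_derivative (\<lambda>h. cM f V *v h)) (at x)" by (rule deriv_interior[OF cM_cb[OF f V(1)] xi])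
    have dg: "(g has_derivative (\<lambda>h. cM g V *v h)) (at x)" by (rule deriv_interior[OF cM_cb[OF g V(1)] xi])
    have "((\<lambda>y. a *\<^sub>R f y + b *\<^sub>R g y) has_derivative (\<lambda>h. a *\<^sub>R (cM f V *v h) + b *\<^sub>R (cM g V *v h))) (at x)"
      by (intro has_derivative_add has_derivative_scaleR_right df dg)
    moreover have "(\<lambda>h. a *\<^sub>R (cM f V *v h) + b *\<^sub>R (cM g V *v h)) = (\<lambda>h. (a *\<^sub>R cM f V + b *\<^sub>R cM g V) *v h)"
      by (simp add: matrix_vector_mult_add_rdistrib scaleR_matrix_vector_assoc)
    ultimately have "grad (\<lambda>y. a *\<^sub>R f y + b *\<^sub>R g y) x = a *\<^sub>R cM f V + b *\<^sub>R cM g V"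
      by (intro jac_of_deriv) simp
    moreover have "grad f x = cM f V" by (rule jac_of_deriv[OF df])
    moreover have "grad g x = cM g V" by (rule jac_of_deriv[OF dg])
    ultimately show False using x xO by simp
  qed
qed



lemma S1_meas:
  assumes "f \<in> S1 T \<Omega>" shows "f \<in> borel_measurable borel"
proof -
  have "f = (\<lambda>x. indicator (closure \<Omega>) x *\<^sub>R f x)"
    using assms unfolding S1_def by (auto simp: indicator_def)
  moreover have "(\<lambda>x. indicator (closure \<Omega>) x *\<^sub>R f x) \<in> borel_measurable borel"
    using assms unfolding S1_def by (intro borel_measurable_continuous_on_indicator) (auto simp: borel_closed)
  ultimately show ?thesis by simp
qed

lemma S1_bdd:
  assumes "f \<in> S1 T \<Omega>" "bounded \<Omega>" shows "\<exists>B. \<forall>x. norm (f x) \<le> B"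
proof -
  have "compact (closure \<Omega>)" using assms(2) by (simp add: compact_closure)
  then have "compact (f ` closure \<Omega>)" using assms(1) unfolding S1_def by (auto intro: compact_continuous_image)
  then obtain B where B: "\<forall>y\<in>f ` closure \<Omega>. norm y \<le> B" using compact_imp_bounded bounded_iff by metis
  show ?thesis
  proof (intro exI allI)
    fix x show "norm (f x) \<le> max B 0"
      using B assms(1) unfolding S1_def by (cases "x \<in> closure \<Omega>") auto
  qed
qed

lemma affine_interp:
  fixes d :: "pt \<Rightarrow> pt"
  assumes "finite V" "\<not> affine_dependent V" "V \<noteq> {}"
  shows "\<exists>(M::mat3) b. \<forall>v\<in>V. M *v v + b = d v"
proof -
  obtain v0 where v0: "v0 \<in> V" using assms(3) by auto
  define V' where "V' = V - {v0}"
  have ins: "insert v0 V' = V" using v0 unfolding V'_def by auto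
  have nv: "v0 \<notin> V'" by (simp add: V'_def)
  have "affine_dependent (insert v0 V') = dependent ((+) (- v0) ` V')"
    by (rule affine_dependent_iff_dependent[OF nv])
  then have "\<not> dependent ((+) (- v0) ` V')" using assms(2) ins by simp
  from linear_independent_extend[OF this, of "\<lambda>y. d (y + v0) - d v0"]
  obtain g where g: "linear g" "\<forall>y\<in>(+) (- v0) ` V'. g y = d (y + v0) - d v0"
    by blast
  define M where "M = matrix g"
  have Mg: "M *v y = g y" for y unfolding M_def using matrix_vector_mul(2)[OF g(1)] by metis
  show ?thesis
  proof (intro exI ballI)
    fix v assume v: "v \<in> V"
    show "M *v v + (d v0 - g v0) = d v"
    proof (cases "v = v0")
      case True then show ?thesis by (simp add: Mg)
    next
      case False
      then have "v \<in> V'" using v unfolding V'_def by auto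
      then have "g (- v0 + v) = d v - d v0" using g(2) by auto
      moreover have "g (- v0 + v) = g v - g v0" using linear_diff[OF g(1), of v v0] by (simp add: add.commute)
      ultimately have "d v - d v0 = g v - g v0" by simp
      then have "d v = d v0 + (g v - g v0)" by (metis add.commute diff_add_cancel)
      then show ?thesis by (simp add: Mg)
    qed
  qed
qed

lemma aff_agree:
  fixes M1 M2 :: mat3
  assumes "\<forall>v\<in>V. M1 *v v + b1 = M2 *v v + b2" "x \<in> convex hull V"
  shows "M1 *v x + b1 = M2 *v x + b2"
proof -
  have "convex {y. (M1 - M2) *v y + (b1 - b2) \<in> {0}}" by (rule affine_convex_pre) simp
  moreover have "V \<subseteq> {y. (M1 - M2) *v y + (b1 - b2) \<in> {0}}"
    using assms(1) by (auto simp: matrix_vector_mult_diff_rdistrib algebra_simps)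
  ultimately have "convex hull V \<subseteq> {y. (M1 - M2) *v y + (b1 - b2) \<in> {0}}" by (rule hull_minimal[rotated])
  then show ?thesis using assms(2) by (auto simp: matrix_vector_mult_diff_rdistrib algebra_simps)
qed

lemma aff_norm:
  fixes M :: mat3
  assumes "\<forall>v\<in>V. norm (M *v v + b) \<le> 1" "x \<in> convex hull V"
  shows "norm (M *v x + b) \<le> 1"
proof -
  have "convex {y. M *v y + b \<in> cball 0 1}" by (rule affine_convex_pre) simp
  moreover have "V \<subseteq> {y. M *v y + b \<in> cball 0 1}" using assms(1) by auto
  ultimately have "convex hull V \<subseteq> {y. M *v y + b \<in> cball 0 1}" by (rule hull_minimal[rotated])
  then show ?thesis using assms(2) by auto
qed



lemma interp_exists:
  assumes m: "tet_mesh T \<Omega>" and d: "\<forall>z\<in>nodes T. norm (d z) \<le> 1"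
  shows "\<exists>w. w \<in> S1 T \<Omega> \<and> (\<forall>z\<in>nodes T. w z = d z) \<and> (\<forall>x. norm (w x) \<le> 1)"
proof -
  have fin: "finite T" using tet_mesh_cover[OF m] by simp
  have ex: "\<exists>(M::mat3) b. \<forall>v\<in>V. M *v v + b = d v" if V: "V \<in> T" for V
  proof (rule affine_interp)
    show "finite V" "\<not> affine_dependent V" using tet_mesh_cell[OF m V] by auto
    show "V \<noteq> {}" using tet_mesh_cell(2)[OF m V] by auto
  qed
  define AM where "AM V = (SOME M. \<exists>b. \<forall>v\<in>V. M *v v + b = d v)" for V
  define Ab where "Ab V = (SOME b. \<forall>v\<in>V. AM V *v v + b = d v)" for V
  have A: "\<forall>v\<in>V. AM V *v v + Ab V = d v" if V: "V \<in> T" for V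
  proof -
    have "\<exists>b. \<forall>v\<in>V. AM V *v v + b = d v" unfolding AM_def using someI_ex[OF ex[OF V]] .
    then show ?thesis unfolding Ab_def by (rule someI_ex)
  qed
  have agree: "AM V *v x + Ab V = AM W *v x + Ab W"
    if V: "V \<in> T" and W: "W \<in> T" and x: "x \<in> convex hull V" "x \<in> convex hull W" for V W x
  proof (cases "V = W")
    case True then show ?thesis by simp
  next
    case False
    then have "x \<in> convex hull (V \<inter> W)" using tet_mesh_conf[OF m V W] x by auto
    moreover have "\<forall>v\<in>V \<inter> W. AM V *v v + Ab V = AM W *v v + Ab W" using A[OF V] A[OF W] by auto
    ultimately show ?thesis using aff_agree by blast
  qed
  define sel where "sel x = (SOME V. V \<in> T \<and> x \<in> convex hull V)" for x
  define w where "w x = (if x \<in> closure \<Omega> then AM (sel x) *v x + Ab (sel x) else 0)" for x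
  have wV: "w x = AM V *v x + Ab V" if V: "V \<in> T" and x: "x \<in> convex hull V" for V x
  proof -
    have xc: "x \<in> closure \<Omega>" using tet_mesh_cover(1)[OF m] V x by auto
    have "sel x \<in> T \<and> x \<in> convex hull (sel x)" unfolding sel_def by (rule someI[of _ V]) (use V x in auto)
    then show ?thesis unfolding w_def using xc agree[OF _ V _ x] by auto
  qed
  have cont: "continuous_on (closure \<Omega>) w"
  proof -
    have "continuous_on (\<Union>V\<in>T. convex hull V) w"
    proof (rule continuous_on_closed_Union[OF fin])
      fix V assume V: "V \<in> T"
      show "closed (convex hull V)" using tet_mesh_cell(5)[OF m V] .
      have "continuous_on (convex hull V) (\<lambda>x. AM V *v x + Ab V)"
        by (intro continuous_on_add continuous_on_const linear_continuous_on)
           (use matrix_vector_mul_linear[of "AM V"] linear_conv_bounded_linear in auto)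
      then show "continuous_on (convex hull V) w"
        by (rule continuous_on_eq) (use wV[OF V] in auto)
    qed
    then show ?thesis using tet_mesh_cover(1)[OF m] by simp
  qed
  have wS: "w \<in> S1 T \<Omega>"
    unfolding S1_def mem_Collect_eq
  proof (intro conjI ballI allI impI)
    show "continuous_on (closure \<Omega>) w" by (rule cont)
    fix V assume V: "V \<in> T"
    show "\<exists>M b. \<forall>x\<in>convex hull V. w x = M *v x + b" using wV[OF V] by blast
  next
    fix x assume "x \<notin> closure \<Omega>" then show "w x = 0" unfolding w_def by simp
  qed
  have nod: "\<forall>z\<in>nodes T. w z = d z"
  proof
    fix z assume "z \<in> nodes T"
    then obtain V where V: "V \<in> T" "z \<in> V" unfolding nodes_def by auto
    then show "w z = d z" using wV[OF V(1) hull_inc[OF V(2)]] A[OF V(1)] by auto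
  qed
  have nrm: "norm (w x) \<le> 1" for x
  proof (cases "x \<in> closure \<Omega>")
    case False then show ?thesis unfolding w_def by simp
  next
    case True
    then obtain V where V: "V \<in> T" "x \<in> convex hull V" using tet_mesh_cover(1)[OF m] by auto
    have "\<forall>v\<in>V. norm (AM V *v v + Ab V) \<le> 1" using A[OF V(1)] d V(1) unfolding nodes_def by auto
    then show ?thesis using wV[OF V] aff_norm[OF _ V(2)] by auto
  qed
  show ?thesis using wS nod nrm by blast
qed

lemma interp_unique:
  assumes m: "tet_mesh T \<Omega>" and w1: "w1 \<in> S1 T \<Omega>" and w2: "w2 \<in> S1 T \<Omega>"
    and e: "\<forall>z\<in>nodes T. w1 z = w2 z"
  shows "w1 = w2"
proof
  fix x show "w1 x = w2 x"
  proof (cases "x \<in> closure \<Omega>")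
    case False then show ?thesis using w1 w2 unfolding S1_def by auto
  next
    case True
    then obtain V where V: "V \<in> T" "x \<in> convex hull V" using tet_mesh_cover(1)[OF m] by auto
    have "\<forall>v\<in>V. cM w1 V *v v + cb w1 V = cM w2 V *v v + cb w2 V"
      using cM_cb[OF w1 V(1)] cM_cb[OF w2 V(1)] e V(1) hull_inc unfolding nodes_def by fastforce
    then show ?thesis using aff_agree[OF _ V(2)] cM_cb[OF w1 V(1)] cM_cb[OF w2 V(1)] V(2) by auto
  qed
qed

lemma Pih_props:
  assumes m: "tet_mesh T \<Omega>"
  shows "Pih T \<Omega> \<phi> \<in> S1 T \<Omega>" "\<forall>x. norm (Pih T \<Omega> \<phi> x) \<le> 1"
proof -
  have "\<forall>z\<in>nodes T. norm (sgn (\<phi> z)) \<le> 1" by (simp add: norm_sgn)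
  from interp_exists[OF m this] obtain w where w: "w \<in> S1 T \<Omega>" "\<forall>z\<in>nodes T. w z = sgn (\<phi> z)" "\<forall>x. norm (w x) \<le> 1"
    by blast
  have "Pih T \<Omega> \<phi> = w" unfolding Pih_def
  proof (rule the_equality)
    show "w \<in> S1 T \<Omega> \<and> (\<forall>z\<in>nodes T. w z = sgn (\<phi> z))" using w by blast
    fix w' assume "w' \<in> S1 T \<Omega> \<and> (\<forall>z\<in>nodes T. w' z = sgn (\<phi> z))"
    then show "w' = w" using interp_unique[OF m _ w(1)] w(2) by auto
  qed
  then show "Pih T \<Omega> \<phi> \<in> S1 T \<Omega>" "\<forall>x. norm (Pih T \<Omega> \<phi> x) \<le> 1" using w by auto
qed



definition l1m :: "mat3 \<Rightarrow> real" where "l1m A = (\<Sum>i\<in>UNIV. \<Sum>j\<in>UNIV. \<bar>A$i$j\<bar>)"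
definition tb :: "tensor4 \<Rightarrow> real" where
  "tb Z = (\<Sum>i\<in>UNIV. \<Sum>j\<in>UNIV. \<Sum>k\<in>UNIV. \<Sum>l\<in>UNIV. \<bar>Z i j k l\<bar>)"

lemma tb_nonneg: "tb Z \<ge> 0" unfolding tb_def by (intro sum_nonneg) auto
lemma l1m_nonneg: "l1m A \<ge> 0" unfolding l1m_def by (intro sum_nonneg) auto

lemma comp_le_norm: "\<bar>A$i$j\<bar> \<le> norm (A::mat3)"
  using component_le_norm_cart[of "A$i" j] Finite_Cartesian_Product.norm_nth_le[of A i] by linarith

lemma norm_le_l1m: "norm A \<le> l1m A"
proof -
  have "norm A \<le> (\<Sum>i\<in>UNIV. norm (A$i))" unfolding norm_vec_def by (rule L2_set_le_sum) auto
  also have "\<dots> \<le> (\<Sum>i\<in>UNIV. \<Sum>j\<in>UNIV. \<bar>A$i$j\<bar>)" by (intro sum_mono norm_le_l1_cart)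
  finally show ?thesis unfolding l1m_def .
qed

lemma l1m_le: "l1m A \<le> 9 * norm A"
proof -
  have "l1m A \<le> (\<Sum>i\<in>(UNIV::3 set). \<Sum>j\<in>(UNIV::3 set). norm A)" unfolding l1m_def
    by (intro sum_mono comp_le_norm)
  also have "\<dots> = 9 * norm A" by simp
  finally show ?thesis .
qed

lemma ddot_nth: "ddot T A $ i $ j = (\<Sum>k\<in>UNIV. \<Sum>l\<in>UNIV. T i j k l * A$k$l)"
  by (simp only: ddot_def vec_lambda_beta)

lemma norm_ddot: "norm (ddot T A) \<le> tb T * norm A"
proof -
  have "norm (ddot T A) \<le> l1m (ddot T A)" by (rule norm_le_l1m)
  also have "\<dots> = (\<Sum>i\<in>UNIV. \<Sum>j\<in>UNIV. \<bar>\<Sum>k\<in>UNIV. \<Sum>l\<in>UNIV. T i j k l * A$k$l\<bar>)"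
    unfolding l1m_def ddot_nth ..
  also have "\<dots> \<le> (\<Sum>i\<in>UNIV. \<Sum>j\<in>UNIV. \<Sum>k\<in>UNIV. \<Sum>l\<in>UNIV. \<bar>T i j k l\<bar> * norm A)"
  proof (intro sum_mono)
    fix i j
    have "\<bar>\<Sum>k\<in>UNIV. \<Sum>l\<in>UNIV. T i j k l * A$k$l\<bar> \<le> (\<Sum>k\<in>UNIV. \<bar>\<Sum>l\<in>UNIV. T i j k l * A$k$l\<bar>)"
      by (rule sum_abs)
    also have "\<dots> \<le> (\<Sum>k\<in>UNIV. \<Sum>l\<in>UNIV. \<bar>T i j k l * A$k$l\<bar>)" by (intro sum_mono sum_abs)
    also have "\<dots> \<le> (\<Sum>k\<in>UNIV. \<Sum>l\<in>UNIV. \<bar>T i j k l\<bar> * norm A)"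
      by (intro sum_mono) (simp only: abs_mult; rule mult_left_mono; simp add: comp_le_norm)
    finally show "\<bar>\<Sum>k\<in>UNIV. \<Sum>l\<in>UNIV. T i j k l * A$k$l\<bar> \<le> (\<Sum>k\<in>UNIV. \<Sum>l\<in>UNIV. \<bar>T i j k l\<bar> * norm A)" .
  qed
  also have "\<dots> = tb T * norm A" unfolding tb_def by (simp add: sum_distrib_right)
  finally show ?thesis .
qed

lemma norm_mv: "norm (A *v v) \<le> l1m A * norm (v::real^3)"
proof -
  have "norm (A *v v) \<le> (\<Sum>i\<in>UNIV. \<bar>(A *v v)$i\<bar>)" by (rule norm_le_l1_cart)
  also have "\<dots> = (\<Sum>i\<in>UNIV. \<bar>\<Sum>j\<in>UNIV. A$i$j * v$j\<bar>)" by (simp only: matrix_vector_mult_def vec_lambda_beta)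
  also have "\<dots> \<le> (\<Sum>i\<in>UNIV. \<Sum>j\<in>UNIV. \<bar>A$i$j\<bar> * norm v)"
  proof (intro sum_mono)
    fix i
    have "\<bar>\<Sum>j\<in>UNIV. A$i$j * v$j\<bar> \<le> (\<Sum>j\<in>UNIV. \<bar>A$i$j * v$j\<bar>)" by (rule sum_abs)
    also have "\<dots> \<le> (\<Sum>j\<in>UNIV. \<bar>A$i$j\<bar> * norm v)"
      by (intro sum_mono) (simp only: abs_mult; rule mult_left_mono; simp add: component_le_norm_cart)
    finally show "\<bar>\<Sum>j\<in>UNIV. A$i$j * v$j\<bar> \<le> (\<Sum>j\<in>UNIV. \<bar>A$i$j\<bar> * norm v)" .
  qed
  also have "\<dots> = l1m A * norm v" unfolding l1m_def by (simp add: sum_distrib_right)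
  finally show ?thesis .
qed

lemma norm_outer: assumes "norm (m::real^3) \<le> 1" shows "norm (outer m m) \<le> 9"
proof -
  have "norm (outer m m) \<le> l1m (outer m m)" by (rule norm_le_l1m)
  also have "\<dots> \<le> (\<Sum>i\<in>(UNIV::3 set). \<Sum>j\<in>(UNIV::3 set). 1)" unfolding l1m_def outer_def
  proof (intro sum_mono)
    fix i j :: 3
    have "\<bar>m$i\<bar> \<le> 1" "\<bar>m$j\<bar> \<le> 1" using component_le_norm_cart[of m] assms by (auto intro: order_trans)
    then have "\<bar>m $ i * m $ j\<bar> \<le> 1" by (simp add: abs_mult mult_le_one)
    then show "\<bar>(\<chi> i j. m $ i * m $ j) $ i $ j\<bar> \<le> 1" by (simp only: vec_lambda_beta)
  qed
  also have "\<dots> = 9" by simp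
  finally show ?thesis .
qed

lemma norm_symeps: "norm (symeps u x) \<le> 5 * norm (grad u x)"
proof -
  have "norm (transpose (grad u x)) \<le> l1m (transpose (grad u x))" by (rule norm_le_l1m)
  also have "\<dots> = l1m (grad u x)" unfolding l1m_def transpose_def vec_lambda_beta by (rule sum.swap)
  also have "\<dots> \<le> 9 * norm (grad u x)" by (rule l1m_le)
  finally have t: "norm (transpose (grad u x)) \<le> 9 * norm (grad u x)" .
  have "norm (symeps u x) \<le> (1/2) * (norm (grad u x) + norm (transpose (grad u x)))"
    unfolding symeps_def by (simp add: norm_triangle_ineq)
  also have "\<dots> \<le> 5 * norm (grad u x)" using t by simp
  finally show ?thesis .
qed

definition KZ :: "tensor4 \<Rightarrow> tensor4 \<Rightarrow> real" where
  "KZ Z C = 18 * tb (ttrans Z) * tb C * (1 + 9 * tb Z)"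

lemma KZ_nonneg: "KZ Z C \<ge> 0" unfolding KZ_def using tb_nonneg by simp

lemma mstress_bound:
  assumes "norm (m x) \<le> 1"
  shows "norm (mstress Z C u m x) \<le> KZ Z C * (norm (symeps u x) + 1)"
proof -
  define \<sigma> where "\<sigma> = sigma Z C u m x"
  have "norm (mstress Z C u m x) \<le> l1m (2 *\<^sub>R ddot (ttrans Z) \<sigma>) * norm (m x)"
    unfolding mstress_def \<sigma>_def by (rule norm_mv)
  also have "\<dots> \<le> l1m (2 *\<^sub>R ddot (ttrans Z) \<sigma>)" using assms l1m_nonneg by (simp add: mult_left_le)
  also have "\<dots> \<le> 9 * norm (2 *\<^sub>R ddot (ttrans Z) \<sigma>)" by (rule l1m_le)
  also have "\<dots> = 18 * norm (ddot (ttrans Z) \<sigma>)" by simp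
  also have "\<dots> \<le> 18 * (tb (ttrans Z) * norm \<sigma>)" using norm_ddot by simp
  also have "norm \<sigma> \<le> tb C * (norm (symeps u x) + 9 * tb Z)"
  proof -
    have "norm \<sigma> \<le> tb C * norm (symeps u x - eps_m Z m x)" unfolding \<sigma>_def sigma_def by (rule norm_ddot)
    also have "norm (symeps u x - eps_m Z m x) \<le> norm (symeps u x) + 9 * tb Z"
    proof -
      have "norm (eps_m Z m x) \<le> tb Z * norm (outer (m x) (m x))" unfolding eps_m_def by (rule norm_ddot)
      also have "\<dots> \<le> tb Z * 9" using norm_outer[OF assms] tb_nonneg by (intro mult_left_mono) auto
      finally show ?thesis using norm_triangle_ineq4[of "symeps u x" "eps_m Z m x"] by simp
    qed
    finally show ?thesis using tb_nonneg by (simp add: mult_left_mono)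
  qed
  then have "18 * (tb (ttrans Z) * norm \<sigma>) \<le> 18 * (tb (ttrans Z) * (tb C * (norm (symeps u x) + 9 * tb Z)))"
    using tb_nonneg by (simp add: mult_left_mono)
  also have "\<dots> \<le> KZ Z C * (norm (symeps u x) + 1)"
  proof -
    have "norm (symeps u x) + 9 * tb Z \<le> (1 + 9 * tb Z) * (norm (symeps u x) + 1)"
      using tb_nonneg[of Z] by (simp add: algebra_simps)
    then show ?thesis unfolding KZ_def using tb_nonneg[of C] tb_nonneg[of "ttrans Z"]
      by (simp add: mult_left_mono mult.assoc)
  qed
  finally show ?thesis .
qed



lemma meas_nth:
  fixes f :: "'a \<Rightarrow> 'b::euclidean_space ^ 'n"
  assumes "f \<in> borel_measurable M"
  shows "(\<lambda>x. f x $ i) \<in> borel_measurable M"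
proof (subst borel_measurable_euclidean_space, intro ballI)
  fix b :: 'b assume "b \<in> Basis"
  have "(\<lambda>x. f x \<bullet> axis i b) \<in> borel_measurable M" using assms by measurable
  then show "(\<lambda>x. f x $ i \<bullet> b) \<in> borel_measurable M" by (simp add: inner_axis)
qed

lemma meas_lambda:
  fixes f :: "'a \<Rightarrow> 'n::finite \<Rightarrow> 'b::euclidean_space"
  assumes "\<And>i. (\<lambda>x. f x i) \<in> borel_measurable M"
  shows "(\<lambda>x. vec_lambda (f x)) \<in> borel_measurable M"
proof (subst borel_measurable_euclidean_space, intro ballI)
  fix b :: "'b^'n" assume "b \<in> Basis"
  then obtain i u where b: "b = axis i u" "u \<in> Basis" unfolding Basis_vec_def by auto
  have "(\<lambda>x. f x i \<bullet> u) \<in> borel_measurable M" using assms[of i] by measurable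
  then show "(\<lambda>x. vec_lambda (f x) \<bullet> b) \<in> borel_measurable M" using b by (simp add: inner_axis)
qed

lemma meas_ddot:
  assumes "F \<in> borel_measurable M"
  shows "(\<lambda>x. ddot T (F x)) \<in> borel_measurable M"
  unfolding ddot_def
  by (intro meas_lambda borel_measurable_sum borel_measurable_times borel_measurable_const meas_nth assms)

lemma meas_outer:
  assumes "a \<in> borel_measurable M" "b \<in> borel_measurable M"
  shows "(\<lambda>x. outer (a x) (b x)) \<in> borel_measurable M"
  unfolding outer_def
  by (intro meas_lambda borel_measurable_times meas_nth assms)

lemma meas_mv:
  fixes F :: "'a \<Rightarrow> mat3"
  assumes "F \<in> borel_measurable M" "v \<in> borel_measurable M"
  shows "(\<lambda>x. F x *v v x) \<in> borel_measurable M"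
  unfolding matrix_vector_mult_def
  by (intro meas_lambda borel_measurable_sum borel_measurable_times meas_nth assms)

lemma meas_transpose:
  fixes F :: "'a \<Rightarrow> mat3"
  assumes "F \<in> borel_measurable M"
  shows "(\<lambda>x. transpose (F x)) \<in> borel_measurable M"
  unfolding transpose_def
  by (intro meas_lambda meas_nth assms)

lemma frob_inner: "frob A B = A \<bullet> B"
  unfolding frob_def inner_vec_def inner_real_def by simp



lemma sint_bdd:
  fixes F :: "pt \<Rightarrow> real"
  assumes meas: "(\<lambda>x. indicator \<Omega> x * F x) \<in> borel_measurable borel"
    and bd: "bounded \<Omega>" and o: "open \<Omega>" and B: "\<forall>x\<in>\<Omega>. \<bar>F x\<bar> \<le> B"
  shows "set_integrable lborel \<Omega> F"
  unfolding set_integrable_def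
proof (rule integrableI_bounded_set[where A = \<Omega> and B = B])
  show "\<Omega> \<in> sets lborel" using o by (simp add: borel_open)
  show "(\<lambda>x. indicator \<Omega> x *\<^sub>R F x) \<in> borel_measurable lborel" using meas by simp
  show "emeasure lborel \<Omega> < \<infinity>" using bd by (rule emeasure_bounded_finite)
  show "AE x\<in>\<Omega> in lborel. norm (indicator \<Omega> x *\<^sub>R F x) \<le> B" using B by auto
  show "AE x in lborel. x \<notin> \<Omega> \<longrightarrow> indicator \<Omega> x *\<^sub>R F x = 0" by auto
qed

definition Gr :: "pt set \<Rightarrow> vfield \<Rightarrow> pt \<Rightarrow> mat3" where
  "Gr \<Omega> f x = indicator \<Omega> x *\<^sub>R grad f x"

lemma ind_cases: "indicator \<Omega> x * (c::real) = (if x \<in> \<Omega> then c else 0)"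
  by (simp add: indicator_def)

lemma gint:
  assumes m: "tet_mesh T \<Omega>" and o: "open \<Omega>" and bd: "bounded \<Omega>"
    and f: "f \<in> S1 T \<Omega>" and g: "g \<in> S1 T \<Omega>"
  shows "set_integrable lborel \<Omega> (\<lambda>x. frob (grad f x) (grad g x))"
proof -
  obtain Bf where Bf: "\<forall>x\<in>\<Omega>. norm (grad f x) \<le> Bf" using grad_meas(2)[OF m o f] by blast
  obtain Bg where Bg: "\<forall>x\<in>\<Omega>. norm (grad g x) \<le> Bg" using grad_meas(2)[OF m o g] by blast
  show ?thesis
  proof (rule sint_bdd[OF _ bd o])
  have "(\<lambda>x. indicator \<Omega> x * frob (grad f x) (grad g x)) = (\<lambda>x. Gr \<Omega> f x \<bullet> Gr \<Omega> g x)"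
    by (auto simp: Gr_def frob_inner indicator_def)
  moreover have "(\<lambda>x. Gr \<Omega> f x \<bullet> Gr \<Omega> g x) \<in> borel_measurable borel"
    using grad_meas(1)[OF m o f] grad_meas(1)[OF m o g] unfolding Gr_def
    by (intro borel_measurable_inner)
  ultimately show "(\<lambda>x. indicator \<Omega> x * frob (grad f x) (grad g x)) \<in> borel_measurable borel" by simp
  show "\<forall>x\<in>\<Omega>. \<bar>frob (grad f x) (grad g x)\<bar> \<le> Bf * Bg"
  proof
    fix x assume x: "x \<in> \<Omega>"
    have "\<bar>frob (grad f x) (grad g x)\<bar> \<le> norm (grad f x) * norm (grad g x)"
      unfolding frob_inner by (rule Cauchy_Schwarz_ineq2)
    also have "\<dots> \<le> Bf * Bg" using Bf Bg x by (intro mult_mono) (auto intro: order_trans[OF norm_ge_zero])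
    finally show "\<bar>frob (grad f x) (grad g x)\<bar> \<le> Bf * Bg" .
  qed
  qed
qed

lemma vint:
  assumes o: "open \<Omega>" and bd: "bounded \<Omega>"
    and f: "f \<in> S1 T \<Omega>" and g: "g \<in> S1 T \<Omega>"
  shows "set_integrable lborel \<Omega> (\<lambda>x. f x \<bullet> g x)"
proof -
  obtain Bf where Bf: "\<forall>x. norm (f x) \<le> Bf" using S1_bdd[OF f bd] by blast
  obtain Bg where Bg: "\<forall>x. norm (g x) \<le> Bg" using S1_bdd[OF g bd] by blast
  show ?thesis
  proof (rule sint_bdd[OF _ bd o])
  show "(\<lambda>x. indicator \<Omega> x * (f x \<bullet> g x)) \<in> borel_measurable borel"
    using S1_meas[OF f] S1_meas[OF g] o
    by (intro borel_measurable_times borel_measurable_inner borel_measurable_indicator) (auto simp: borel_open)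
  show "\<forall>x\<in>\<Omega>. \<bar>f x \<bullet> g x\<bar> \<le> Bf * Bg"
  proof
    fix x
    have "\<bar>f x \<bullet> g x\<bar> \<le> norm (f x) * norm (g x)" by (rule Cauchy_Schwarz_ineq2)
    also have "\<dots> \<le> Bf * Bg" using Bf Bg by (intro mult_mono) (auto intro: order_trans[OF norm_ge_zero])
    finally show "\<bar>f x \<bullet> g x\<bar> \<le> Bf * Bg" .
  qed
  qed
qed

lemma symeps_Gr: "x \<in> \<Omega> \<Longrightarrow> symeps u x = (1/2) *\<^sub>R (Gr \<Omega> u x + transpose (Gr \<Omega> u x))"
  by (simp add: symeps_def Gr_def)

lemma Gr_meas:
  assumes m: "tet_mesh T \<Omega>" and o: "open \<Omega>" and f: "f \<in> S1 T \<Omega>"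
  shows "Gr \<Omega> f \<in> borel_measurable borel"
  using grad_meas(1)[OF m o f] unfolding Gr_def .

lemma eint:
  assumes m: "tet_mesh T \<Omega>" and o: "open \<Omega>" and bd: "bounded \<Omega>" and u: "u \<in> S1 T \<Omega>"
  shows "set_integrable lborel \<Omega> (\<lambda>x. frob (symeps u x) (symeps u x))"
proof -
  obtain B where B: "\<forall>x\<in>\<Omega>. norm (grad u x) \<le> B" using grad_meas(2)[OF m o u] by blast
  show ?thesis
  proof (rule sint_bdd[OF _ bd o])
  define S where "S x = (1/2) *\<^sub>R (Gr \<Omega> u x + transpose (Gr \<Omega> u x))" for x
  have "(\<lambda>x. indicator \<Omega> x * frob (symeps u x) (symeps u x)) = (\<lambda>x. indicator \<Omega> x * (S x \<bullet> S x))"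
    by (auto simp: S_def symeps_Gr frob_inner indicator_def)
  moreover have "(\<lambda>x. indicator \<Omega> x * (S x \<bullet> S x)) \<in> borel_measurable borel"
    unfolding S_def using Gr_meas[OF m o u] o
    by (intro borel_measurable_times borel_measurable_inner borel_measurable_indicator
        borel_measurable_scaleR borel_measurable_add borel_measurable_const meas_transpose) (auto simp: borel_open)
  ultimately show "(\<lambda>x. indicator \<Omega> x * frob (symeps u x) (symeps u x)) \<in> borel_measurable borel" by simp
  show "\<forall>x\<in>\<Omega>. \<bar>frob (symeps u x) (symeps u x)\<bar> \<le> (5 * B) * (5 * B)"
  proof
    fix x assume x: "x \<in> \<Omega>"
    have n: "norm (symeps u x) \<le> 5 * B" using norm_symeps[of u x] B x by auto
    have "\<bar>frob (symeps u x) (symeps u x)\<bar> \<le> norm (symeps u x) * norm (symeps u x)"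
      unfolding frob_inner by (rule Cauchy_Schwarz_ineq2)
    also have "\<dots> \<le> (5 * B) * (5 * B)" using n order_trans[OF norm_ge_zero n] by (intro mult_mono) auto
    finally show "\<bar>frob (symeps u x) (symeps u x)\<bar> \<le> (5 * B) * (5 * B)" .
  qed
  qed
qed



lemma msint:
  assumes m: "tet_mesh T \<Omega>" and o: "open \<Omega>" and bd: "bounded \<Omega>"
    and uh: "uh \<in> S1 T \<Omega>" and P: "P \<in> S1 T \<Omega>" and P1: "\<forall>x. norm (P x) \<le> 1" and w: "w \<in> S1 T \<Omega>"
  shows "set_integrable lborel \<Omega> (\<lambda>x. mstress Z C uh P x \<bullet> w x)"
    and "set_integrable lborel \<Omega> (\<lambda>x. mstress Z C uh P x \<bullet> mstress Z C uh P x)"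
proof -
  define MS where "MS x = (2 *\<^sub>R ddot (ttrans Z) (ddot C ((1/2) *\<^sub>R (Gr \<Omega> uh x + transpose (Gr \<Omega> uh x))
      - ddot Z (outer (P x) (P x))))) *v P x" for x
  have eq: "mstress Z C uh P x = MS x" if "x \<in> \<Omega>" for x
    using that by (simp add: MS_def mstress_def sigma_def eps_m_def symeps_Gr)
  have mMS: "MS \<in> borel_measurable borel" unfolding MS_def
    using Gr_meas[OF m o uh] S1_meas[OF P]
    by (intro meas_mv borel_measurable_scaleR borel_measurable_const meas_ddot borel_measurable_diff
        borel_measurable_add meas_transpose meas_outer) auto
  obtain B where B: "\<forall>x\<in>\<Omega>. norm (grad uh x) \<le> B" using grad_meas(2)[OF m o uh] by blast
  obtain Bw where Bw: "\<forall>x. norm (w x) \<le> Bw" using S1_bdd[OF w bd] by blast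
  define Bm where "Bm = KZ Z C * (5 * B + 1)"
  have nm: "norm (mstress Z C uh P x) \<le> Bm" if x: "x \<in> \<Omega>" for x
  proof -
    have "norm (mstress Z C uh P x) \<le> KZ Z C * (norm (symeps uh x) + 1)" using mstress_bound P1 by blast
    also have "\<dots> \<le> KZ Z C * (5 * B + 1)"
      using norm_symeps[of uh x] B x KZ_nonneg by (intro mult_left_mono) auto
    finally show ?thesis unfolding Bm_def .
  qed
  show "set_integrable lborel \<Omega> (\<lambda>x. mstress Z C uh P x \<bullet> w x)"
  proof (rule sint_bdd[OF _ bd o])
    have "(\<lambda>x. indicator \<Omega> x * (mstress Z C uh P x \<bullet> w x)) = (\<lambda>x. indicator \<Omega> x * (MS x \<bullet> w x))"
      using eq by (auto simp: indicator_def)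
    moreover have "(\<lambda>x. indicator \<Omega> x * (MS x \<bullet> w x)) \<in> borel_measurable borel"
      using mMS S1_meas[OF w] o by (intro borel_measurable_times borel_measurable_inner borel_measurable_indicator) (auto simp: borel_open)
    ultimately show "(\<lambda>x. indicator \<Omega> x * (mstress Z C uh P x \<bullet> w x)) \<in> borel_measurable borel" by simp
    show "\<forall>x\<in>\<Omega>. \<bar>mstress Z C uh P x \<bullet> w x\<bar> \<le> Bm * Bw"
    proof
      fix x assume x: "x \<in> \<Omega>"
      have "\<bar>mstress Z C uh P x \<bullet> w x\<bar> \<le> norm (mstress Z C uh P x) * norm (w x)" by (rule Cauchy_Schwarz_ineq2)
      also have "\<dots> \<le> Bm * Bw" using nm[OF x] Bw order_trans[OF norm_ge_zero nm[OF x]] by (intro mult_mono) auto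
      finally show "\<bar>mstress Z C uh P x \<bullet> w x\<bar> \<le> Bm * Bw" .
    qed
  qed
  show "set_integrable lborel \<Omega> (\<lambda>x. mstress Z C uh P x \<bullet> mstress Z C uh P x)"
  proof (rule sint_bdd[OF _ bd o])
    have "(\<lambda>x. indicator \<Omega> x * (mstress Z C uh P x \<bullet> mstress Z C uh P x)) = (\<lambda>x. indicator \<Omega> x * (MS x \<bullet> MS x))"
      using eq by (auto simp: indicator_def)
    moreover have "(\<lambda>x. indicator \<Omega> x * (MS x \<bullet> MS x)) \<in> borel_measurable borel"
      using mMS o by (intro borel_measurable_times borel_measurable_inner borel_measurable_indicator) (auto simp: borel_open)
    ultimately show "(\<lambda>x. indicator \<Omega> x * (mstress Z C uh P x \<bullet> mstress Z C uh P x)) \<in> borel_measurable borel" by simp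
    show "\<forall>x\<in>\<Omega>. \<bar>mstress Z C uh P x \<bullet> mstress Z C uh P x\<bar> \<le> Bm * Bm"
    proof
      fix x assume x: "x \<in> \<Omega>"
      have "\<bar>mstress Z C uh P x \<bullet> mstress Z C uh P x\<bar> \<le> norm (mstress Z C uh P x) * norm (mstress Z C uh P x)" by (rule Cauchy_Schwarz_ineq2)
      also have "\<dots> \<le> Bm * Bm" using nm[OF x] order_trans[OF norm_ge_zero nm[OF x]] by (intro mult_mono) auto
      finally show "\<bar>mstress Z C uh P x \<bullet> mstress Z C uh P x\<bar> \<le> Bm * Bm" .
    qed
  qed
qed

lemma gip_expand:
  assumes m: "tet_mesh T \<Omega>" and o: "open \<Omega>" and bd: "bounded \<Omega>"
    and f: "f \<in> S1 T \<Omega>" and g: "g \<in> S1 T \<Omega>"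
  shows "gip \<Omega> (\<lambda>x. f x + k *\<^sub>R g x) (\<lambda>x. f x + k *\<^sub>R g x) = gip \<Omega> f f + 2*k * gip \<Omega> f g + k^2 * gip \<Omega> g g"
proof -
  define h where "h = (\<lambda>x. f x + k *\<^sub>R g x)"
  have h1: "h = (\<lambda>y. 1 *\<^sub>R f y + k *\<^sub>R g y)" unfolding h_def by simp
  have hS: "h \<in> S1 T \<Omega>" unfolding h1 by (rule S1_lin[OF f g])
  have AEl: "AE x in lborel. x \<in> \<Omega> \<longrightarrow> grad h x = 1 *\<^sub>R grad f x + k *\<^sub>R grad g x"
    unfolding h1 by (rule grad_lin_AE[OF m f g])
  have i1: "integrable lborel (\<lambda>x. indicator \<Omega> x *\<^sub>R frob (grad f x) (grad f x))"
    using gint[OF m o bd f f] unfolding set_integrable_def .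
  have i2: "integrable lborel (\<lambda>x. indicator \<Omega> x *\<^sub>R frob (grad f x) (grad g x))"
    using gint[OF m o bd f g] unfolding set_integrable_def .
  have i3: "integrable lborel (\<lambda>x. indicator \<Omega> x *\<^sub>R frob (grad g x) (grad g x))"
    using gint[OF m o bd g g] unfolding set_integrable_def .
  have ih: "integrable lborel (\<lambda>x. indicator \<Omega> x *\<^sub>R frob (grad h x) (grad h x))"
    using gint[OF m o bd hS hS] unfolding set_integrable_def .
  have "(LINT x|lborel. indicator \<Omega> x *\<^sub>R frob (grad h x) (grad h x)) =
        (LINT x|lborel. (indicator \<Omega> x *\<^sub>R frob (grad f x) (grad f x)
            + (2*k) * (indicator \<Omega> x *\<^sub>R frob (grad f x) (grad g x)))
            + k^2 * (indicator \<Omega> x *\<^sub>R frob (grad g x) (grad g x)))"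
  proof (rule integral_cong_AE)
    show "(\<lambda>x. indicator \<Omega> x *\<^sub>R frob (grad h x) (grad h x)) \<in> borel_measurable lborel"
      using ih by (rule borel_measurable_integrable)
    show "(\<lambda>x. (indicator \<Omega> x *\<^sub>R frob (grad f x) (grad f x)
            + (2*k) * (indicator \<Omega> x *\<^sub>R frob (grad f x) (grad g x)))
            + k^2 * (indicator \<Omega> x *\<^sub>R frob (grad g x) (grad g x))) \<in> borel_measurable lborel"
      using i1 i2 i3 by (intro borel_measurable_add borel_measurable_times borel_measurable_const borel_measurable_integrable)
    show "AE x in lborel. indicator \<Omega> x *\<^sub>R frob (grad h x) (grad h x) =
        (indicator \<Omega> x *\<^sub>R frob (grad f x) (grad f x)
            + (2*k) * (indicator \<Omega> x *\<^sub>R frob (grad f x) (grad g x)))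
            + k^2 * (indicator \<Omega> x *\<^sub>R frob (grad g x) (grad g x))"
      using AEl
    proof (rule AE_mp, intro AE_I2 impI)
      fix x assume H: "x \<in> \<Omega> \<longrightarrow> grad h x = 1 *\<^sub>R grad f x + k *\<^sub>R grad g x"
      show "indicator \<Omega> x *\<^sub>R frob (grad h x) (grad h x) =
        (indicator \<Omega> x *\<^sub>R frob (grad f x) (grad f x)
            + (2*k) * (indicator \<Omega> x *\<^sub>R frob (grad f x) (grad g x)))
            + k^2 * (indicator \<Omega> x *\<^sub>R frob (grad g x) (grad g x))"
      proof (cases "x \<in> \<Omega>")
        case False then show ?thesis by simp
      next
        case True
        then have "grad h x = grad f x + k *\<^sub>R grad g x" using H by simp
        then show ?thesis using True
          by (simp add: frob_inner inner_add_left inner_add_right inner_commute[of "grad g x" "grad f x"]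
              power2_eq_square algebra_simps)
      qed
    qed
  qed
  also have "\<dots> = (LINT x|lborel. indicator \<Omega> x *\<^sub>R frob (grad f x) (grad f x))
       + (2*k) * (LINT x|lborel. indicator \<Omega> x *\<^sub>R frob (grad f x) (grad g x))
       + k^2 * (LINT x|lborel. indicator \<Omega> x *\<^sub>R frob (grad g x) (grad g x))"
    using i1 i2 i3 by (simp add: integral_add)
  finally show ?thesis unfolding gip_def mip_def set_lebesgue_integral_def h_def .
qed



lemma ip_cross_zero: "ip \<Omega> (\<lambda>x. cross3 (a x) (w x)) w = 0"
  unfolding ip_def by (simp add: dot_cross_self(3))

lemma step_ineq:
  assumes m: "tet_mesh T \<Omega>" and o: "open \<Omega>" and bd: "bounded \<Omega>" and al: "\<alpha> > 0" and k: "k > 0"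
    and mi: "mi \<in> S1 T \<Omega>" and uh: "uh \<in> S1 T \<Omega>" and P: "P \<in> S1 T \<Omega>" and P1: "\<forall>x. norm (P x) \<le> 1"
    and wK: "w \<in> Kh T \<Omega> hm"
    and eqn: "\<forall>\<phi>\<in>Kh T \<Omega> hm. \<alpha> * ip \<Omega> w \<phi> + ip \<Omega> (\<lambda>x. cross3 (hm x) (w x)) \<phi> + k / 2 * gip \<Omega> w \<phi>
        = - gip \<Omega> mi \<phi> + ip \<Omega> (mstress Z C uh P) \<phi>"
  shows "gip \<Omega> (\<lambda>x. mi x + k *\<^sub>R w x) (\<lambda>x. mi x + k *\<^sub>R w x) + k * \<alpha> * ip \<Omega> w w
      \<le> gip \<Omega> mi mi + (k / \<alpha>) * ip \<Omega> (mstress Z C uh P) (mstress Z C uh P)"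
proof -
  have w: "w \<in> S1 T \<Omega>" using wK unfolding Kh_def by auto
  define E where "E = ip \<Omega> w w"
  define X where "X = gip \<Omega> mi w"
  define Y where "Y = gip \<Omega> w w"
  define Pm where "Pm = ip \<Omega> (mstress Z C uh P) w"
  define Q where "Q = ip \<Omega> (mstress Z C uh P) (mstress Z C uh P)"
  have e1: "\<alpha> * E + k / 2 * Y = - X + Pm"
    using eqn[rule_format, OF wK] ip_cross_zero[of \<Omega> hm w] unfolding E_def Y_def X_def Pm_def by simp
  have e2: "gip \<Omega> (\<lambda>x. mi x + k *\<^sub>R w x) (\<lambda>x. mi x + k *\<^sub>R w x) = gip \<Omega> mi mi + 2*k*X + k^2 * Y"
    unfolding X_def Y_def by (rule gip_expand[OF m o bd mi w])
  have iw: "set_integrable lborel \<Omega> (\<lambda>x. w x \<bullet> w x)" by (rule vint[OF o bd w w])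
  have imw: "set_integrable lborel \<Omega> (\<lambda>x. mstress Z C uh P x \<bullet> w x)" by (rule msint(1)[OF m o bd uh P P1 w])
  have imm: "set_integrable lborel \<Omega> (\<lambda>x. mstress Z C uh P x \<bullet> mstress Z C uh P x)" by (rule msint(2)[OF m o bd uh P P1 w])
  have pw: "mstress Z C uh P x \<bullet> w x \<le> (\<alpha>/2) * (w x \<bullet> w x) + (1/(2*\<alpha>)) * (mstress Z C uh P x \<bullet> mstress Z C uh P x)" for x
  proof -
    define a where "a = mstress Z C uh P x"
    define b where "b = w x"
    have "0 \<le> (\<alpha> *\<^sub>R b - a) \<bullet> (\<alpha> *\<^sub>R b - a)" by simp
    also have "\<dots> = \<alpha>^2 * (b \<bullet> b) - 2 * \<alpha> * (a \<bullet> b) + a \<bullet> a"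
      by (simp add: inner_diff_left inner_diff_right inner_commute power2_eq_square algebra_simps)
    finally have "2 * \<alpha> * (a \<bullet> b) \<le> \<alpha>^2 * (b \<bullet> b) + a \<bullet> a" by simp
    then have "a \<bullet> b \<le> (\<alpha>^2 * (b \<bullet> b) + a \<bullet> a) / (2 * \<alpha>)" using al by (simp add: field_simps)
    also have "\<dots> = (\<alpha>/2) * (b \<bullet> b) + (1/(2*\<alpha>)) * (a \<bullet> a)" using al by (simp add: field_simps power2_eq_square)
    finally show ?thesis unfolding a_def b_def .
  qed
  have "Pm \<le> (LINT x:\<Omega>|lborel. (\<alpha>/2) * (w x \<bullet> w x) + (1/(2*\<alpha>)) * (mstress Z C uh P x \<bullet> mstress Z C uh P x))"
    unfolding Pm_def ip_def
    by (rule set_integral_mono[OF imw]) (use iw imm pw in \<open>auto intro!: set_integral_add set_integrable_mult_right\<close>)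
  also have "\<dots> = (\<alpha>/2) * E + (1/(2*\<alpha>)) * Q"
    unfolding E_def Q_def ip_def
    using iw imm by (simp add: set_integral_add set_integrable_mult_right set_integral_mult_right)
  finally have e3: "Pm \<le> (\<alpha>/2) * E + (1/(2*\<alpha>)) * Q" .
  have X: "X = Pm - \<alpha> * E - k/2 * Y" using e1 by simp
  have "gip \<Omega> (\<lambda>x. mi x + k *\<^sub>R w x) (\<lambda>x. mi x + k *\<^sub>R w x) + k * \<alpha> * E
      = gip \<Omega> mi mi + 2*k*Pm - k*\<alpha>*E"
    unfolding e2 X by (simp add: power2_eq_square algebra_simps)
  also have "\<dots> \<le> gip \<Omega> mi mi + 2*k*((\<alpha>/2) * E + (1/(2*\<alpha>)) * Q) - k*\<alpha>*E"
    using e3 k by simp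
  also have "\<dots> = gip \<Omega> mi mi + (k/\<alpha>) * Q" using al by (simp add: field_simps)
  finally show ?thesis unfolding E_def Q_def .
qed



lemma transpose_lin: "transpose (a *\<^sub>R A + b *\<^sub>R (B::mat3)) = a *\<^sub>R transpose A + b *\<^sub>R transpose B"
  by (simp add: vec_eq_iff transpose_def)

lemma symeps_lin:
  assumes "grad h x = a *\<^sub>R grad f x + b *\<^sub>R grad g x"
  shows "symeps h x = a *\<^sub>R symeps f x + b *\<^sub>R symeps g x"
  unfolding symeps_def assms transpose_lin by (simp add: algebra_simps)

lemma sq_bound: "((3/2) * a + (1/2) * b)^2 \<le> 5 * (a^2 + b^2)" for a b :: real
proof -
  have e: "((3/2) * a + (1/2) * b)^2 = (9/4) * a^2 + (3/4) * (a^2 + b^2 - (a-b)^2) + (1/4) * b^2"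
    by (simp add: power2_eq_square algebra_simps)
  have g: "\<And>A B D::real. 0 \<le> A \<Longrightarrow> 0 \<le> B \<Longrightarrow> 0 \<le> D \<Longrightarrow> 9/4*A + 3/4*(A+B-D) + 1/4*B \<le> 5*(A+B)"
    by argo
  show ?thesis unfolding e by (rule g) simp_all
qed

lemma sq_bound2: "(n + 1)^2 \<le> 2 * (n^2 + 1)" for n :: real
proof -
  have "(n + 1)^2 = 2 * (n^2 + 1) - (n - 1)^2" by (simp add: power2_eq_square algebra_simps)
  then show ?thesis by simp
qed

lemma Q_bound:
  assumes m: "tet_mesh T \<Omega>" and o: "open \<Omega>" and bd: "bounded \<Omega>"
    and u1: "u1 \<in> S1 T \<Omega>" and u0: "u0 \<in> S1 T \<Omega>" and P: "P \<in> S1 T \<Omega>" and P1: "\<forall>x. norm (P x) \<le> 1"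
  shows "ip \<Omega> (mstress Z C (\<lambda>x. (3/2) *\<^sub>R u1 x - (1/2) *\<^sub>R u0 x) P) (mstress Z C (\<lambda>x. (3/2) *\<^sub>R u1 x - (1/2) *\<^sub>R u0 x) P)
     \<le> 10 * (KZ Z C)^2 * (measure lborel \<Omega> + mip \<Omega> (symeps u1) (symeps u1) + mip \<Omega> (symeps u0) (symeps u0))"
proof -
  define uh where "uh = (\<lambda>x. (3/2) *\<^sub>R u1 x - (1/2) *\<^sub>R u0 x)"
  have uh': "uh = (\<lambda>y. (3/2) *\<^sub>R u1 y + (-1/2) *\<^sub>R u0 y)" unfolding uh_def by (simp add: fun_eq_iff)
  have uhS: "uh \<in> S1 T \<Omega>" unfolding uh' by (rule S1_lin[OF u1 u0])
  have AEl: "AE x in lborel. x \<in> \<Omega> \<longrightarrow> grad uh x = (3/2) *\<^sub>R grad u1 x + (-1/2) *\<^sub>R grad u0 x"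
    unfolding uh' by (rule grad_lin_AE[OF m u1 u0])
  define K3 where "K3 = 10 * (KZ Z C)^2"
  have K3: "K3 \<ge> 0" unfolding K3_def by simp
  have imm: "set_integrable lborel \<Omega> (\<lambda>x. mstress Z C uh P x \<bullet> mstress Z C uh P x)"
    by (rule msint(2)[OF m o bd uhS P P1 uhS])
  have i1: "set_integrable lborel \<Omega> (\<lambda>x. frob (symeps u1 x) (symeps u1 x))" by (rule eint[OF m o bd u1])
  have i0: "set_integrable lborel \<Omega> (\<lambda>x. frob (symeps u0 x) (symeps u0 x))" by (rule eint[OF m o bd u0])
  have ic: "set_integrable lborel \<Omega> (\<lambda>x. 1::real)"
    by (rule sint_bdd[OF _ bd o, where B=1]) (use o in \<open>auto simp: borel_open\<close>)
  have pw: "mstress Z C uh P x \<bullet> mstress Z C uh P x \<le> K3 * (1 + frob (symeps u1 x) (symeps u1 x) + frob (symeps u0 x) (symeps u0 x))"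
    if g: "grad uh x = (3/2) *\<^sub>R grad u1 x + (-1/2) *\<^sub>R grad u0 x" for x
  proof -
    define n where "n = norm (symeps uh x)"
    define n1 where "n1 = norm (symeps u1 x)"
    define n0 where "n0 = norm (symeps u0 x)"
    have s: "symeps uh x = (3/2) *\<^sub>R symeps u1 x + (-1/2) *\<^sub>R symeps u0 x" by (rule symeps_lin[OF g])
    have "n \<le> norm ((3/2) *\<^sub>R symeps u1 x) + norm ((-1/2) *\<^sub>R symeps u0 x)"
      unfolding n_def s by (rule norm_triangle_ineq)
    then have nle: "n \<le> (3/2) * n1 + (1/2) * n0" unfolding n1_def n0_def by simp
    have n0': "0 \<le> n" unfolding n_def by simp
    have "n^2 \<le> ((3/2) * n1 + (1/2) * n0)^2" using nle n0' by (intro power_mono) auto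
    also have "\<dots> \<le> 5 * (n1^2 + n0^2)" by (rule sq_bound)
    finally have nsq: "n^2 \<le> 5 * (n1^2 + n0^2)" .
    have nm: "norm (mstress Z C uh P x) \<le> KZ Z C * (n + 1)" unfolding n_def using mstress_bound P1 by blast
    have "mstress Z C uh P x \<bullet> mstress Z C uh P x = (norm (mstress Z C uh P x))^2" by (simp add: power2_norm_eq_inner)
    also have "\<dots> \<le> (KZ Z C * (n + 1))^2" using nm by (intro power_mono) auto
    also have "\<dots> \<le> 2 * (KZ Z C)^2 * (n^2 + 1)"
    proof -
      have "(n + 1)^2 \<le> 2 * (n^2 + 1)" by (rule sq_bound2)
      then have 1: "(KZ Z C)^2 * (n + 1)^2 \<le> (KZ Z C)^2 * (2 * (n^2 + 1))" by (rule mult_left_mono) simp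
      have "(KZ Z C * (n + 1))^2 = (KZ Z C)^2 * (n + 1)^2" by (simp add: power_mult_distrib)
      also have "\<dots> \<le> (KZ Z C)^2 * (2 * (n^2 + 1))" by (rule 1)
      also have "\<dots> = 2 * (KZ Z C)^2 * (n^2 + 1)" by (simp add: algebra_simps)
      finally show ?thesis .
    qed
    also have "\<dots> \<le> 2 * (KZ Z C)^2 * (5 * (n1^2 + n0^2) + 1)" using nsq by (intro mult_left_mono) auto
    also have "\<dots> \<le> K3 * (1 + n1^2 + n0^2)" unfolding K3_def
    proof -
      have "2 * (5 * (n1^2 + n0^2) + 1) \<le> 10 * (1 + n1^2 + n0^2)" by simp
      then show "2 * (KZ Z C)^2 * (5 * (n1^2 + n0^2) + 1) \<le> 10 * (KZ Z C)^2 * (1 + n1^2 + n0^2)"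
        using mult_left_mono[of _ _ "(KZ Z C)^2"] by (simp add: algebra_simps)
    qed
    finally show ?thesis unfolding n1_def n0_def by (simp add: frob_inner power2_norm_eq_inner)
  qed
  have "ip \<Omega> (mstress Z C uh P) (mstress Z C uh P)
      \<le> (LINT x:\<Omega>|lborel. K3 * (1 + frob (symeps u1 x) (symeps u1 x) + frob (symeps u0 x) (symeps u0 x)))"
    unfolding ip_def
  proof (rule set_integral_mono_AE[OF imm])
    show "set_integrable lborel \<Omega> (\<lambda>x. K3 * (1 + frob (symeps u1 x) (symeps u1 x) + frob (symeps u0 x) (symeps u0 x)))"
      using ic i1 i0 by (intro set_integrable_mult_right set_integral_add) auto
    show "AE x\<in>\<Omega> in lborel. mstress Z C uh P x \<bullet> mstress Z C uh P x
        \<le> K3 * (1 + frob (symeps u1 x) (symeps u1 x) + frob (symeps u0 x) (symeps u0 x))"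
      using AEl by (rule AE_mp) (auto intro!: AE_I2 pw)
  qed
  also have "\<dots> = K3 * (measure lborel \<Omega> + mip \<Omega> (symeps u1) (symeps u1) + mip \<Omega> (symeps u0) (symeps u0))"
  proof -
    have "(LINT x:\<Omega>|lborel. (1::real)) = measure lborel \<Omega>"
      using set_integral_const[of \<Omega> lborel "1::real"] emeasure_bounded_finite[OF bd] o by (simp add: borel_open)
    then show ?thesis unfolding mip_def
      using ic i1 i0 by (simp add: set_integral_add set_integral_mult_right set_integrable_mult_right)
  qed
  finally show ?thesis unfolding uh_def K3_def .
qed



lemma mip_nonneg: "mip \<Omega> A A \<ge> 0"
  unfolding mip_def set_lebesgue_integral_def
  by (intro integral_nonneg_AE AE_I2) (simp add: frob_inner)

lemma ip_nonneg: "ip \<Omega> f f \<ge> 0"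
  unfolding ip_def set_lebesgue_integral_def
  by (intro integral_nonneg_AE AE_I2) simp

lemma gip_nonneg: "gip \<Omega> f f \<ge> 0"
  unfolding gip_def by (rule mip_nonneg)

lemma one_step:
  assumes m: "tet_mesh T \<Omega>" and o: "open \<Omega>" and bd: "bounded \<Omega>" and al: "\<alpha> > 0" and k: "k > 0"
    and mi: "mi \<in> S1 T \<Omega>" and u1: "u1 \<in> S1 T \<Omega>" and u0: "u0 \<in> S1 T \<Omega>"
    and wK: "w \<in> Kh T \<Omega> hm"
    and eqn: "\<forall>\<phi>\<in>Kh T \<Omega> hm. \<alpha> * ip \<Omega> w \<phi> + ip \<Omega> (\<lambda>x. cross3 (hm x) (w x)) \<phi> + k / 2 * gip \<Omega> w \<phi>
        = - gip \<Omega> mi \<phi> + ip \<Omega> (mstress Z C (\<lambda>x. (3/2) *\<^sub>R u1 x - (1/2) *\<^sub>R u0 x) (Pih T \<Omega> hm)) \<phi>"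
  shows "gip \<Omega> (\<lambda>x. mi x + k *\<^sub>R w x) (\<lambda>x. mi x + k *\<^sub>R w x) + k * \<alpha> * ip \<Omega> w w
      \<le> gip \<Omega> mi mi + (k / \<alpha>) * (10 * (KZ Z C)^2 * (1 + measure lborel \<Omega>))
           * (1 + mip \<Omega> (symeps u1) (symeps u1) + mip \<Omega> (symeps u0) (symeps u0))"
proof -
  define uh where "uh = (\<lambda>x. (3/2) *\<^sub>R u1 x - (1/2) *\<^sub>R u0 x)"
  have uh': "uh = (\<lambda>y. (3/2) *\<^sub>R u1 y + (-1/2) *\<^sub>R u0 y)" unfolding uh_def by (simp add: fun_eq_iff)
  have uhS: "uh \<in> S1 T \<Omega>" unfolding uh' by (rule S1_lin[OF u1 u0])
  define P where "P = Pih T \<Omega> hm"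
  have PS: "P \<in> S1 T \<Omega>" "\<forall>x. norm (P x) \<le> 1" unfolding P_def using Pih_props[OF m] by auto
  define Q where "Q = ip \<Omega> (mstress Z C uh P) (mstress Z C uh P)"
  define \<mu> where "\<mu> = measure lborel \<Omega>"
  define e1 where "e1 = mip \<Omega> (symeps u1) (symeps u1)"
  define e0 where "e0 = mip \<Omega> (symeps u0) (symeps u0)"
  have st: "gip \<Omega> (\<lambda>x. mi x + k *\<^sub>R w x) (\<lambda>x. mi x + k *\<^sub>R w x) + k * \<alpha> * ip \<Omega> w w \<le> gip \<Omega> mi mi + (k / \<alpha>) * Q"
    unfolding Q_def by (rule step_ineq[OF m o bd al k mi uhS PS(1) PS(2) wK]) (use eqn in \<open>simp add: uh_def P_def\<close>)
  have Qb: "Q \<le> 10 * (KZ Z C)^2 * (\<mu> + e1 + e0)"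
    unfolding Q_def uh_def \<mu>_def e1_def e0_def by (rule Q_bound[OF m o bd u1 u0 PS(1) PS(2)])
  have nn: "\<mu> \<ge> 0" "e1 \<ge> 0" "e0 \<ge> 0" unfolding \<mu>_def e1_def e0_def by (simp_all add: mip_nonneg)
  have "\<mu> + e1 + e0 \<le> (1 + \<mu>) * (1 + e1 + e0)"
  proof -
    have "(1 + \<mu>) * (1 + e1 + e0) = (\<mu> + e1 + e0) + (1 + \<mu> * (e1 + e0))" by (simp add: algebra_simps)
    moreover have "0 \<le> \<mu> * (e1 + e0)" using nn by simp
    ultimately show ?thesis by simp
  qed
  then have "10 * (KZ Z C)^2 * (\<mu> + e1 + e0) \<le> 10 * (KZ Z C)^2 * ((1 + \<mu>) * (1 + e1 + e0))"
    by (intro mult_left_mono) simp_all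
  with Qb have "Q \<le> (10 * (KZ Z C)^2 * (1 + \<mu>)) * (1 + e1 + e0)" by (simp add: mult.assoc)
  then have "(k / \<alpha>) * Q \<le> (k / \<alpha>) * ((10 * (KZ Z C)^2 * (1 + \<mu>)) * (1 + e1 + e0))"
    using al k by (intro mult_left_mono) simp_all
  with st show ?thesis unfolding \<mu>_def e1_def e0_def by (simp add: mult.assoc)
qed

lemma sum_bound:
  fixes e :: "nat \<Rightarrow> real"
  assumes "\<And>i. e i \<ge> 0"
  shows "(\<Sum>i=1..n. 1 + e i + e (i - 1)) + (1 + e n) \<le> 2 * (\<Sum>i=0..n. 1 + e i)"
proof (induction n)
  case 0 then show ?case using assms[of 0] by simp
next
  case (Suc n)
  have "(\<Sum>i=1..Suc n. 1 + e i + e (i - 1)) = (\<Sum>i=1..n. 1 + e i + e (i - 1)) + (1 + e (Suc n) + e n)"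
    by simp
  moreover have "(\<Sum>i=0..Suc n. 1 + e i) = (\<Sum>i=0..n. 1 + e i) + (1 + e (Suc n))" by simp
  ultimately show ?case using Suc.IH by simp
qed



lemma scheme_S1:
  assumes sch: "scheme \<Omega> \<Gamma>D T \<alpha> \<beta> Z C k N m v u ud0"
  shows "\<forall>i\<le>N. m i \<in> S1 T \<Omega> \<and> u i \<in> S1 T \<Omega>"
proof -
  have s: "m 0 \<in> Mh0 T \<Omega>" "u 0 \<in> S1D T \<Omega> \<Gamma>D" "v 1 \<in> Kh T \<Omega> (m 0)"
      "m 1 = (\<lambda>x. m 0 x + k *\<^sub>R v 1 x)" "u 1 \<in> S1D T \<Omega> \<Gamma>D"
    and l: "\<And>i. 1 \<le> i \<Longrightarrow> i \<le> N - 1 \<Longrightarrow> v (i+1) \<in> Kh T \<Omega> (hat m i) \<and> m (i+1) = (\<lambda>x. m i x + k *\<^sub>R v (i+1) x)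
        \<and> u (i+1) \<in> S1D T \<Omega> \<Gamma>D"
    using sch unfolding scheme_def by blast+
  have lin: "(\<lambda>x. f x + k *\<^sub>R g x) \<in> S1 T \<Omega>" if "f \<in> S1 T \<Omega>" "g \<in> S1 T \<Omega>" for f g
    using S1_lin[OF that, of 1 k] by simp
  show ?thesis
  proof (intro allI impI)
    fix i assume "i \<le> N"
    then show "m i \<in> S1 T \<Omega> \<and> u i \<in> S1 T \<Omega>"
    proof (induction i)
      case 0 then show ?case using s unfolding Mh0_def S1D_def by auto
    next
      case (Suc i)
      show ?case
      proof (cases "i = 0")
        case True
        have "m 0 \<in> S1 T \<Omega>" "v 1 \<in> S1 T \<Omega>" using s unfolding Mh0_def Kh_def by auto
        then show ?thesis using True s lin unfolding S1D_def by auto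
      next
        case False
        then have li: "v (i+1) \<in> Kh T \<Omega> (hat m i) \<and> m (i+1) = (\<lambda>x. m i x + k *\<^sub>R v (i+1) x) \<and> u (i+1) \<in> S1D T \<Omega> \<Gamma>D"
          using l[of i] Suc.prems by auto
        have "m i \<in> S1 T \<Omega>" using Suc by auto
        moreover have "v (i+1) \<in> S1 T \<Omega>" using li unfolding Kh_def by auto
        ultimately show ?thesis using li lin unfolding S1D_def by auto
      qed
    qed
  qed
qed



theorem proposition4p2:
  fixes \<Omega> \<Gamma>D \<Gamma>N :: "(real^3) set" and \<alpha> \<beta> T :: real and Z C :: "3 \<Rightarrow> 3 \<Rightarrow> 3 \<Rightarrow> 3 \<Rightarrow> real"
  assumes "lipschitz_domain \<Omega>" and "polyhedral_domain \<Omega>" and "boundary_split \<Omega> \<Gamma>D \<Gamma>N"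
    and "minor_sym Z" and "minor_sym C" and "major_sym C" and "unif_pos_def C"
    and "\<alpha> > 0" and "0 \<le> \<beta>" and "\<beta> \<le> 1/2" and "T > 0"
  shows "\<exists>c>0. \<forall>\<T> (N::nat) m v u ud0 j.
     tet_mesh \<T> \<Omega> \<and> N \<ge> 1 \<and>
     scheme \<Omega> \<Gamma>D \<T> \<alpha> \<beta> Z C (T / real N) N m v u ud0 \<and>
     (\<forall>i. 1 \<le> i \<and> i \<le> N - 1 \<longrightarrow> (\<forall>z\<in>nodes \<T>. hat m i z \<noteq> 0)) \<and>
     2 \<le> j \<and> j \<le> N \<longrightarrow>
       gip \<Omega> (m j) (m j) + (T / real N) * (\<Sum>i = 1..j-1. ip \<Omega> (v (i+1)) (v (i+1)))
       \<le> c * (gip \<Omega> (m 1) (m 1)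
              + (T / real N) * (\<Sum>i = 0..j-1. 1 + mip \<Omega> (symeps (u i)) (symeps (u i))))"
proof -
  have o: "open \<Omega>" and bd: "bounded \<Omega>" using assms(1) unfolding lipschitz_domain_def by auto
  have al: "\<alpha> > 0" by fact
  define \<mu> where "\<mu> = measure lborel \<Omega>"
  define Kq where "Kq = 10 * (KZ Z C)^2 * (1 + \<mu>)"
  have Kq: "Kq \<ge> 0" unfolding Kq_def \<mu>_def by simp
  define M1 where "M1 = max 1 (1/\<alpha>)"
  define M2 where "M2 = max 1 (2*Kq/\<alpha>)"
  have M1: "M1 \<ge> 1" "1/\<alpha> \<le> M1" unfolding M1_def by auto
  have M2: "M2 \<ge> 1" "2*Kq/\<alpha> \<le> M2" unfolding M2_def by auto
  show ?thesis
  proof (intro exI[of _ "M1*M2"] conjI allI impI)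
    show "M1 * M2 > 0" using M1 M2 by simp
    fix \<T> N m v u ud0 j
    assume H: "tet_mesh \<T> \<Omega> \<and> N \<ge> 1 \<and>
     scheme \<Omega> \<Gamma>D \<T> \<alpha> \<beta> Z C (T / real N) N m v u ud0 \<and>
     (\<forall>i. 1 \<le> i \<and> i \<le> N - 1 \<longrightarrow> (\<forall>z\<in>nodes \<T>. hat m i z \<noteq> 0)) \<and>
     2 \<le> j \<and> j \<le> N"
    define k where "k = T / real N"
    have mesh: "tet_mesh \<T> \<Omega>" and N1: "N \<ge> 1" and sch: "scheme \<Omega> \<Gamma>D \<T> \<alpha> \<beta> Z C k N m v u ud0"
      and j: "2 \<le> j" "j \<le> N" using H unfolding k_def by auto
    have k: "k > 0" unfolding k_def using assms(11) N1 by simp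
    have SS: "\<forall>i\<le>N. m i \<in> S1 \<T> \<Omega> \<and> u i \<in> S1 \<T> \<Omega>" by (rule scheme_S1[OF sch])
    have loop: "\<And>i. 1 \<le> i \<Longrightarrow> i \<le> N - 1 \<Longrightarrow> v (i+1) \<in> Kh \<T> \<Omega> (hat m i) \<and>
        (\<forall>\<phi>\<in>Kh \<T> \<Omega> (hat m i).
           \<alpha> * ip \<Omega> (v (i+1)) \<phi> + ip \<Omega> (\<lambda>x. cross3 (hat m i x) (v (i+1) x)) \<phi>
             + k / 2 * gip \<Omega> (v (i+1)) \<phi>
           = - gip \<Omega> (m i) \<phi>
             + ip \<Omega> (mstress Z C (hat u i) (Pih \<T> \<Omega> (hat m i))) \<phi>) \<and>
        m (i+1) = (\<lambda>x. m i x + k *\<^sub>R v (i+1) x)"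
      using sch unfolding scheme_def by blast
    define a where "a i = gip \<Omega> (m i) (m i)" for i
    define E where "E i = ip \<Omega> (v i) (v i)" for i
    define e where "e i = mip \<Omega> (symeps (u i)) (symeps (u i))" for i
    define X where "X = k * \<alpha>"
    define Y where "Y = (k / \<alpha>) * Kq"
    have step: "a (i+1) + X * E (i+1) \<le> a i + Y * (1 + e i + e (i - 1))" if i: "1 \<le> i" "i \<le> N - 1" for i
    proof -
      note li = loop[OF i]
      have hu: "hat u i = (\<lambda>x. (3/2) *\<^sub>R u i x - (1/2) *\<^sub>R u (i - 1) x)" unfolding hat_def ..
      have mi: "m i \<in> S1 \<T> \<Omega>" using SS i by auto
      have ui: "u i \<in> S1 \<T> \<Omega>" "u (i - 1) \<in> S1 \<T> \<Omega>" using SS i by auto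
      have "gip \<Omega> (\<lambda>x. m i x + k *\<^sub>R v (i+1) x) (\<lambda>x. m i x + k *\<^sub>R v (i+1) x) + k * \<alpha> * ip \<Omega> (v (i+1)) (v (i+1))
          \<le> gip \<Omega> (m i) (m i) + (k / \<alpha>) * (10 * (KZ Z C)^2 * (1 + measure lborel \<Omega>))
           * (1 + mip \<Omega> (symeps (u i)) (symeps (u i)) + mip \<Omega> (symeps (u (i - 1))) (symeps (u (i - 1))))"
        by (rule one_step[OF mesh o bd al k mi ui(1) ui(2)]) (use li hu in auto)
      then show ?thesis using li unfolding a_def E_def e_def X_def Y_def Kq_def \<mu>_def by (simp add: mult.assoc)
    qed
    have tele: "n + 1 \<le> N \<Longrightarrow> a (n+1) + X * (\<Sum>i=1..n. E (i+1)) \<le> a 1 + Y * (\<Sum>i=1..n. 1 + e i + e (i - 1))" for n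
    proof (induction n)
      case 0 then show ?case by simp
    next
      case (Suc n)
      have IH: "a (n+1) + X * (\<Sum>i=1..n. E (i+1)) \<le> a 1 + Y * (\<Sum>i=1..n. 1 + e i + e (i - 1))"
        using Suc by simp
      have st: "a (n+2) + X * E (n+2) \<le> a (n+1) + Y * (1 + e (n+1) + e n)"
        using step[of "n+1"] Suc.prems by simp
      have s1: "X * (\<Sum>i=1..Suc n. E (i+1)) = X * (\<Sum>i=1..n. E (i+1)) + X * E (n+2)"
        by (simp add: distrib_left)
      have s2: "Y * (\<Sum>i=1..Suc n. 1 + e i + e (i - 1)) = Y * (\<Sum>i=1..n. 1 + e i + e (i - 1)) + Y * (1 + e (n+1) + e n)"
        by (simp add: distrib_left)
      show ?case unfolding s1 s2 using IH st by simp
    qed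
    define n where "n = j - 1"
    have nj: "n + 1 = j" "j - 1 = n" using j unfolding n_def by auto
    have T1: "a j + X * (\<Sum>i=1..n. E (i+1)) \<le> a 1 + Y * (\<Sum>i=1..n. 1 + e i + e (i - 1))"
      using tele[of n] nj j by simp
    have enn: "\<And>i. e i \<ge> 0" unfolding e_def by (rule mip_nonneg)
    define S where "S = (\<Sum>i=0..n. 1 + e i)"
    have Snn: "S \<ge> 0" unfolding S_def using enn by (intro sum_nonneg) (simp add: add_nonneg_nonneg)
    have sb: "(\<Sum>i=1..n. 1 + e i + e (i - 1)) \<le> 2 * S"
      using sum_bound[of e n, OF enn] enn[of n] unfolding S_def by simp
    have Ynn: "Y \<ge> 0" unfolding Y_def using k al Kq by simp
    define SE where "SE = (\<Sum>i=1..n. E (i+1))"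
    have SEnn: "SE \<ge> 0" unfolding SE_def E_def by (intro sum_nonneg ip_nonneg)
    have ann: "a j \<ge> 0" "a 1 \<ge> 0" unfolding a_def by (simp_all add: gip_nonneg)
    have A: "a j + k * SE \<le> M1 * (a j + X * SE)"
    proof -
      have "a j \<le> M1 * a j" using M1 ann by (simp add: mult_le_cancel_right1)
      moreover have "k * SE = (1/\<alpha>) * (X * SE)" unfolding X_def using al by simp
      moreover have "(1/\<alpha>) * (X * SE) \<le> M1 * (X * SE)"
        using M1 SEnn k al unfolding X_def by (intro mult_right_mono) simp_all
      ultimately show ?thesis by (simp add: distrib_left)
    qed
    have B: "a j + X * SE \<le> a 1 + (2*Kq/\<alpha>) * (k * S)"
    proof -
      have "Y * (\<Sum>i=1..n. 1 + e i + e (i - 1)) \<le> Y * (2 * S)" using sb Ynn by (rule mult_left_mono)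
      moreover have "Y * (2 * S) = (2*Kq/\<alpha>) * (k * S)" unfolding Y_def by simp
      ultimately show ?thesis using T1 unfolding SE_def by simp
    qed
    have C: "a 1 + (2*Kq/\<alpha>) * (k * S) \<le> M2 * (a 1 + k * S)"
    proof -
      have "a 1 \<le> M2 * a 1" using M2 ann by (simp add: mult_le_cancel_right1)
      moreover have "(2*Kq/\<alpha>) * (k * S) \<le> M2 * (k * S)" using M2 k Snn by (intro mult_right_mono) simp_all
      ultimately show ?thesis by (simp add: distrib_left)
    qed
    have "a j + k * SE \<le> M1 * (M2 * (a 1 + k * S))"
    proof -
      have "a j + X * SE \<le> M2 * (a 1 + k * S)" using B C by simp
      then have "M1 * (a j + X * SE) \<le> M1 * (M2 * (a 1 + k * S))" using M1 by (intro mult_left_mono) simp_all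
      then show ?thesis using A by simp
    qed
    then show "gip \<Omega> (m j) (m j) + (T / real N) * (\<Sum>i = 1..j-1. ip \<Omega> (v (i+1)) (v (i+1)))
       \<le> M1 * M2 * (gip \<Omega> (m 1) (m 1)
              + (T / real N) * (\<Sum>i = 0..j-1. 1 + mip \<Omega> (symeps (u i)) (symeps (u i))))"
      unfolding a_def SE_def E_def S_def e_def k_def nj(2) by (simp add: mult.assoc)
  qed
qed

end
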